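(* Let $\{(Y_{1\,t},Y_{2\,t})\}$ follow the MixTSQL model described in the context with true parameter $\boldsymbol\theta_0=(\boldsymbol\theta^{(1)}_0,\boldsymbol\theta^{(2)}_0)^\top$, and let $\widehat{\boldsymbol\theta}$ be the quasi-maximum likelihood estimator based on observations $t=1,\ldots,n$. Assume: (A2) $\{(Y_{1\,t},Y_{2\,t})\}$ is stationary and ergodic; (B1) $\boldsymbol\theta_0$ is an interior point of $\Theta=\Theta_1\times\Theta_2$, a compact subset of $\mathbb R^{r+s+1}\times\mathbb R^{p+k+1}$; (C1) $E\big[\sup_{\boldsymbol\theta\in\Theta}|Q_{1\,t}(\boldsymbol\theta^{(1)})+Q_{2\,t}(\boldsymbol\theta^{(2)})|\big]<\infty$; (C2) $E\big[-Q_{1\,t}(\boldsymbol\theta^{(1)})-Q_{2\,t}(\boldsymbol\theta^{(2)})\big]$, as a function of $\boldsymbol\theta\in\Theta$, has a unique minimum at $\boldsymbol\theta_0$. Then $\widehat{\boldsymbol\theta}\to\boldsymbol\theta_0$ in probability as $n\to\infty$.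
   Context: MixTSQL model: with $\mathcal F^{(1,2)}_{t-1}=\sigma(Y_{1\,t-1},Y_{2\,t-1},Y_{1\,t-2},Y_{2\,t-2},\ldots)$, $Y_{1\,t}$ and $Y_{2\,t}$ are conditionally independent given $\mathcal F^{(1,2)}_{t-1}$, and conditionally on $\mathcal F^{(1,2)}_{t-1}$, $Y_{j\,t}$ has mean $\mu_{j\,t}$ and variance $\phi_jV_j(\mu_{j\,t})$ ($\phi_j>0$, $V_j$ a variance function), $j=1,2$, where $g_1(\mu_{1\,t})=\nu_{1\,t}(\boldsymbol\theta^{(1)})=\beta^{(1)}_0+\sum_{i=1}^r\beta^{(1)}_i\widetilde Y_{1\,t-i}+\sum_{l=1}^s\gamma^{(1)}_l\widetilde Y_{2\,t-l}$ and $g_2(\mu_{2\,t})=\nu_{2\,t}(\boldsymbol\theta^{(2)})=\beta^{(2)}_0+\sum_{i=1}^p\beta^{(2)}_i\widetilde Y_{2\,t-i}+\sum_{l=1}^k\gamma^{(2)}_l\widetilde Y_{1\,t-l}$; here $g_1,g_2$ are continuous, invertible, twice differentiable link functions, $\widetilde Y_{j\,t}=T_j(Y_{j\,t})$ for given transformations $T_j$, $\boldsymbol\theta^{(1)}=(\beta^{(1)}_0,\ldots,\beta^{(1)}_r,\gamma^{(1)}_1,\ldots,\gamma^{(1)}_s)^\top$, $\boldsymbol\theta^{(2)}=(\beta^{(2)}_0,\ldots,\beta^{(2)}_p,\gamma^{(2)}_1,\ldots,\gamma^{(2)}_k)^\top$, $\boldsymbol\theta=(\boldsymbol\theta^{(1)},\boldsymbol\theta^{(2)})^\top$.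 Quasi-log-likelihood: $Q_j(y;\mu)=\frac{1}{\phi_j}\int_y^\mu\frac{y-\omega}{V_j(\omega)}d\omega$, and $Q_{j\,t}(\boldsymbol\theta^{(j)})=Q_j(Y_{j\,t};\mu_{j\,t})$ with $\mu_{j\,t}=g_j^{-1}(\nu_{j\,t}(\boldsymbol\theta^{(j)}))$. With $m=\max(p,k,r,s)$, $\widetilde Q(\boldsymbol\theta)=\sum_{t=m+1}^n\{Q_{1\,t}(\boldsymbol\theta^{(1)})+Q_{2\,t}(\boldsymbol\theta^{(2)})\}$, and the QMLE is $\widehat{\boldsymbol\theta}=\arg\min_{\boldsymbol\theta\in\Theta}\{-\widetilde Q(\boldsymbol\theta)\}$ (conditional on the first $m$ observations). *)

theory Defs
  imports "HOL-Probability.Probability"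
begin

(* Parameter vectors in R^d are represented as functions nat => real that vanish
   from index d on; the product topology of nat => real restricted to this
   subspace is the Euclidean topology of R^d. *)
definition coord_space :: "nat \<Rightarrow> (nat \<Rightarrow> real) set" where
  "coord_space d = {x. \<forall>i\<ge>d. x i = 0}"

definition coord_dist :: "nat \<Rightarrow> (nat \<Rightarrow> real) \<Rightarrow> (nat \<Rightarrow> real) \<Rightarrow> real" where
  "coord_dist d x y = sqrt (\<Sum>i<d. (x i - y i)^2)"

definition lin_pred :: "nat \<Rightarrow> nat \<Rightarrow> (real \<Rightarrow> real) \<Rightarrow> (real \<Rightarrow> real) \<Rightarrow>
    (int \<Rightarrow> 'a \<Rightarrow> real) \<Rightarrow> (int \<Rightarrow> 'a \<Rightarrow> real) \<Rightarrow> (nat \<Rightarrow> real) \<Rightarrow> int \<Rightarrow> 'a \<Rightarrow> real" where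
  "lin_pred a b Ta Tb Ya Yb th t w =
     th 0 + (\<Sum>i=1..a. th i * Ta (Ya (t - int i) w))
          + (\<Sum>l=1..b. th (a + l) * Tb (Yb (t - int l) w))"

definition mix_mean :: "(real \<Rightarrow> real) \<Rightarrow> real set \<Rightarrow> nat \<Rightarrow> nat \<Rightarrow> (real \<Rightarrow> real) \<Rightarrow> (real \<Rightarrow> real) \<Rightarrow>
    (int \<Rightarrow> 'a \<Rightarrow> real) \<Rightarrow> (int \<Rightarrow> 'a \<Rightarrow> real) \<Rightarrow> (nat \<Rightarrow> real) \<Rightarrow> int \<Rightarrow> 'a \<Rightarrow> real" where
  "mix_mean g D a b Ta Tb Ya Yb th t w = inv_into D g (lin_pred a b Ta Tb Ya Yb th t w)"

definition quasi_loglik :: "real \<Rightarrow> (real \<Rightarrow> real) \<Rightarrow> real \<Rightarrow> real \<Rightarrow> real" where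
  "quasi_loglik phi V y mu =
     (1 / phi) * interval_lebesgue_integral lborel (ereal y) (ereal mu) (\<lambda>w. (y - w) / V w)"

(* F_{t-1} = sigma(Ya s, Yb s : s < t) *)
definition past_sigma :: "'a measure \<Rightarrow> (int \<Rightarrow> 'a \<Rightarrow> real) \<Rightarrow> (int \<Rightarrow> 'a \<Rightarrow> real) \<Rightarrow> int \<Rightarrow> 'a measure" where
  "past_sigma M Ya Yb t = sigma (space M)
     ({Ya s -` B \<inter> space M | s B. s < t \<and> B \<in> sets borel} \<union>
      {Yb s -` B \<inter> space M | s B. s < t \<and> B \<in> sets borel})"

definition cond_indep :: "'a measure \<Rightarrow> 'a measure \<Rightarrow> ('a \<Rightarrow> real) \<Rightarrow> ('a \<Rightarrow> real) \<Rightarrow> bool" where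
  "cond_indep M F X Z \<longleftrightarrow>
     (\<forall>A\<in>sets borel. \<forall>B\<in>sets borel. AE w in M.
        real_cond_exp M F (\<lambda>v. indicator A (X v) * indicator B (Z v)) w =
        real_cond_exp M F (\<lambda>v. indicator A (X v)) w * real_cond_exp M F (\<lambda>v. indicator B (Z v)) w)"

definition joint_path :: "(int \<Rightarrow> 'a \<Rightarrow> real) \<Rightarrow> (int \<Rightarrow> 'a \<Rightarrow> real) \<Rightarrow> 'a \<Rightarrow> int \<Rightarrow> real \<times> real" where
  "joint_path Ya Yb w = (\<lambda>t. (Ya t w, Yb t w))"

definition path_space :: "(int \<Rightarrow> real \<times> real) measure" where
  "path_space = PiM UNIV (\<lambda>_. borel)"

definition time_shift :: "(int \<Rightarrow> 'b) \<Rightarrow> int \<Rightarrow> 'b" where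
  "time_shift x = (\<lambda>t. x (t + 1))"

definition path_law :: "'a measure \<Rightarrow> (int \<Rightarrow> 'a \<Rightarrow> real) \<Rightarrow> (int \<Rightarrow> 'a \<Rightarrow> real) \<Rightarrow> (int \<Rightarrow> real \<times> real) measure" where
  "path_law M Ya Yb = distr M path_space (joint_path Ya Yb)"

definition stationary_proc :: "'a measure \<Rightarrow> (int \<Rightarrow> 'a \<Rightarrow> real) \<Rightarrow> (int \<Rightarrow> 'a \<Rightarrow> real) \<Rightarrow> bool" where
  "stationary_proc M Ya Yb \<longleftrightarrow> distr (path_law M Ya Yb) path_space time_shift = path_law M Ya Yb"

definition ergodic_proc :: "'a measure \<Rightarrow> (int \<Rightarrow> 'a \<Rightarrow> real) \<Rightarrow> (int \<Rightarrow> 'a \<Rightarrow> real) \<Rightarrow> bool" where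
  "ergodic_proc M Ya Yb \<longleftrightarrow>
     (\<forall>A\<in>sets path_space. time_shift -` A \<inter> space path_space = A \<longrightarrow>
        measure (path_law M Ya Yb) A = 0 \<or> measure (path_law M Ya Yb) A = 1)"

end

theory Submission
  imports Defs
begin


locale mpres =
  fixes P :: "'b measure" and T :: "'b \<Rightarrow> 'b"
  assumes prob: "prob_space P"
    and Tm: "T \<in> measurable P P"
    and Tp: "distr P P T = P"
begin

lemma Tk_meas: "(T ^^ k) \<in> measurable P P"
  by (induction k) (auto intro: measurable_compose[OF _ Tm])

lemma Tk_pres: "distr P P (T ^^ k) = P"
proof (induction k)
  case 0 then show ?case by (simp add: distr_id2)
next
  case (Suc k)
  have "distr P P (T ^^ Suc k) = distr (distr P P (T ^^ k)) P T"
    by (simp add: distr_distr[OF Tm Tk_meas])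
  also have "\<dots> = P" using Suc Tp by simp
  finally show ?case .
qed

lemma integrable_Tk:
  fixes g :: "'b \<Rightarrow> real"
  assumes "integrable P g" shows "integrable P (\<lambda>x. g ((T ^^ k) x))"
proof -
  have "integrable (distr P P (T ^^ k)) g" using assms Tk_pres by simp
  then show ?thesis
    using integrable_distr_eq[OF Tk_meas, of g] assms by auto
qed

lemma integral_Tk:
  fixes g :: "'b \<Rightarrow> real"
  assumes "g \<in> borel_measurable P" shows "(\<integral>x. g ((T ^^ k) x) \<partial>P) = (\<integral>x. g x \<partial>P)"
  using integral_distr[OF Tk_meas assms, of k] Tk_pres by simp

definition S :: "('b \<Rightarrow> real) \<Rightarrow> nat \<Rightarrow> 'b \<Rightarrow> real" where
  "S g n x = (\<Sum>i<n. g ((T ^^ i) x))"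

lemma S_Suc: "S g (Suc n) x = g x + S g n (T x)"
  unfolding S_def by (subst sum.lessThan_Suc_shift) (simp add: funpow_Suc_right del: funpow.simps)

lemma S_0[simp]: "S g 0 x = 0" by (simp add: S_def)

lemma integrable_S: assumes "integrable P g" shows "integrable P (S g n)"
  unfolding S_def by (rule Bochner_Integration.integrable_sum) (rule integrable_Tk[OF assms])

fun Mx :: "('b \<Rightarrow> real) \<Rightarrow> nat \<Rightarrow> 'b \<Rightarrow> real" where
  "Mx g 0 x = 0"
| "Mx g (Suc n) x = max (Mx g n x) (S g (Suc n) x)"

lemma Mx_nonneg: "Mx g n x \<ge> 0"
  by (induction n) auto

lemma Mx_ge: "k \<le> n \<Longrightarrow> S g k x \<le> Mx g n x"
proof (induction n)
  case 0 then show ?case by simp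
next
  case (Suc n) then show ?case by (cases "k = Suc n") auto
qed

lemma Mx_cases: "Mx g n x = 0 \<or> (\<exists>k\<in>{1..n}. Mx g n x = S g k x)"
proof (induction n)
  case 0 then show ?case by simp
next
  case (Suc n) then show ?case
    by (cases "Mx g n x \<le> S g (Suc n) x") (auto simp: max_def)
qed

lemma integrable_Mx: "integrable P g \<Longrightarrow> integrable P (Mx g n)"
proof (induction n)
  case 0 then show ?case by simp
next
  case (Suc n)
  have "integrable P (\<lambda>x. max (Mx g n x) (S g (Suc n) x))"
    by (intro integrable_max Suc integrable_S)
  then show ?case by simp
qed

lemma Mx_key:
  assumes "Mx g n x > 0" shows "Mx g n x \<le> g x + Mx g n (T x)"
proof -
  from Mx_cases[of g n x] assms obtain k where k: "k \<in> {1..n}" "Mx g n x = S g k x" by auto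
  then obtain j where j: "k = Suc j" by (cases k) auto
  have "S g k x = g x + S g j (T x)" using j S_Suc by simp
  also have "S g j (T x) \<le> Mx g n (T x)" using k j by (intro Mx_ge) auto
  finally show ?thesis using k by simp
qed

lemma maximal_lemma:
  assumes g: "integrable P g"
  shows "0 \<le> (\<integral>x. (if Mx g n x > 0 then g x else 0) \<partial>P)"
proof -
  have iM: "integrable P (Mx g n)" by (rule integrable_Mx[OF g])
  have iMT: "integrable P (\<lambda>x. Mx g n (T x))"
    using integrable_Tk[OF iM, of 1] by simp
  have "(\<integral>x. Mx g n (T x) \<partial>P) = (\<integral>x. Mx g n x \<partial>P)"
    using integral_Tk[of "Mx g n" 1] iM by auto
  then have "0 = (\<integral>x. Mx g n x - Mx g n (T x) \<partial>P)"
    using iM iMT by simp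
  also have "\<dots> \<le> (\<integral>x. (if Mx g n x > 0 then g x else 0) \<partial>P)"
  proof (rule integral_mono)
    show "integrable P (\<lambda>x. Mx g n x - Mx g n (T x))" using iM iMT by simp
    have [measurable]: "Mx g n \<in> borel_measurable P" "g \<in> borel_measurable P"
      using iM g by auto
    show "integrable P (\<lambda>x. (if Mx g n x > 0 then g x else 0))"
      by (rule Bochner_Integration.integrable_bound[OF g]) auto
    fix x assume "x \<in> space P"
    show "Mx g n x - Mx g n (T x) \<le> (if Mx g n x > 0 then g x else 0)"
      using Mx_key[of g n x] Mx_nonneg[of g n x] Mx_nonneg[of g n "T x"] by auto
  qed
  finally show ?thesis .
qed

lemma S_meas[measurable]:
  fixes g :: "'b \<Rightarrow> real"
  assumes "g \<in> borel_measurable P" shows "S g n \<in> borel_measurable P"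
  unfolding S_def using Tk_meas assms by measurable

lemma pos_if_full:
  fixes g :: "'b \<Rightarrow> real"
  assumes g: "integrable P g"
    and full: "AE x in P. \<exists>k. S g k x > 0"
  shows "0 \<le> (\<integral>x. g x \<partial>P)"
proof -
  have gm[measurable]: "g \<in> borel_measurable P" using g by auto
  define s where "s n x = (if Mx g n x > 0 then g x else 0)" for n x
  define l where "l x = (if (\<exists>k. S g k x > 0) then g x else 0)" for x
  have iM: "Mx g n \<in> borel_measurable P" for n using integrable_Mx[OF g] by auto
  have sm: "s n \<in> borel_measurable P" for n
    unfolding s_def using iM[of n] by measurable
  have lm: "l \<in> borel_measurable P"
    unfolding l_def by measurable
  have conv: "(\<lambda>n. s n x) \<longlonglongrightarrow> l x" for x
  proof (cases "\<exists>k. S g k x > 0")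
    case True
    then obtain k where k: "S g k x > 0" by auto
    have "eventually (\<lambda>n. s n x = l x) sequentially"
      using eventually_ge_at_top[of k]
    proof (rule eventually_mono)
      fix n assume "k \<le> n"
      then have "Mx g n x > 0" using Mx_ge[of k n g x] k by simp
      then show "s n x = l x" using True unfolding s_def l_def by simp
    qed
    then show ?thesis by (rule tendsto_eventually)
  next
    case False
    have "s n x = 0" for n
    proof -
      have "\<not> Mx g n x > 0" using Mx_cases[of g n x] False by auto
      then show ?thesis unfolding s_def by simp
    qed
    then show ?thesis using False unfolding l_def by simp
  qed
  have "(\<lambda>n. \<integral>x. s n x \<partial>P) \<longlonglongrightarrow> (\<integral>x. l x \<partial>P)"
  proof (rule integral_dominated_convergence[where w="\<lambda>x. norm (g x)"])
    show "integrable P (\<lambda>x. norm (g x))" using g by auto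
    show "AE x in P. (\<lambda>n. s n x) \<longlonglongrightarrow> l x" using conv by auto
    show "AE x in P. norm (s n x) \<le> norm (g x)" for n unfolding s_def by auto
  qed (use sm lm in auto)
  moreover have "0 \<le> (\<integral>x. s n x \<partial>P)" for n
    unfolding s_def by (rule maximal_lemma[OF g])
  ultimately have "0 \<le> (\<integral>x. l x \<partial>P)"
    by (simp add: LIMSEQ_le_const)
  also have "(\<integral>x. l x \<partial>P) = (\<integral>x. g x \<partial>P)"
    by (rule integral_cong_AE) (use lm full in \<open>auto simp: l_def\<close>)
  finally show ?thesis .
qed

definition W :: "('b \<Rightarrow> real) \<Rightarrow> 'b set" where
  "W g = {x \<in> space P. \<forall>C::nat. \<exists>n. S g n x > real C}"

lemma W_sets:
  fixes g :: "'b \<Rightarrow> real"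
  assumes [measurable]: "g \<in> borel_measurable P" shows "W g \<in> sets P"
  unfolding W_def by measurable

lemma W_inv:
  fixes g :: "'b \<Rightarrow> real"
  shows "T -` W g \<inter> space P = W g"
proof -
  have Ts: "x \<in> space P \<Longrightarrow> T x \<in> space P" for x using Tm by (auto simp: measurable_def)
  have "(\<forall>C::nat. \<exists>n. S g n (T x) > real C) \<longleftrightarrow> (\<forall>C::nat. \<exists>n. S g n x > real C)" for x
  proof
    assume a: "\<forall>C::nat. \<exists>n. S g n (T x) > real C"
    show "\<forall>C::nat. \<exists>n. S g n x > real C"
    proof
      fix C :: nat
      obtain C' :: nat where C': "real C' \<ge> real C + \<bar>g x\<bar>" using real_arch_simple by blast
      from a obtain n where "S g n (T x) > real C'" by auto
      then have "S g (Suc n) x > real C" using S_Suc[of g n x] C' by auto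
      then show "\<exists>n. S g n x > real C" by blast
    qed
  next
    assume a: "\<forall>C::nat. \<exists>n. S g n x > real C"
    show "\<forall>C::nat. \<exists>n. S g n (T x) > real C"
    proof
      fix C :: nat
      obtain C' :: nat where C': "real C' \<ge> real C + \<bar>g x\<bar>" using real_arch_simple by blast
      from a obtain n where n: "S g n x > real C'" by auto
      then obtain j where j: "n = Suc j" by (cases n) auto
      then have "S g j (T x) > real C" using S_Suc[of g j x] C' n by auto
      then show "\<exists>n. S g n (T x) > real C" by blast
    qed
  qed
  then show ?thesis unfolding W_def using Ts by auto
qed

lemma bounded_ae:
  fixes f :: "'b \<Rightarrow> real"
  assumes erg: "\<And>A. A \<in> sets P \<Longrightarrow> T -` A \<inter> space P = A \<Longrightarrow> measure P A = 0 \<or> measure P A = 1"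
    and f: "integrable P f" and b: "b > (\<integral>x. f x \<partial>P)"
  shows "AE x in P. \<exists>C. \<forall>n. S f n x - real n * b \<le> C"
proof -
  interpret prob_space P by (rule prob)
  define g where "g x = f x - b" for x
  have g: "integrable P g" unfolding g_def using f by auto
  have gm[measurable]: "g \<in> borel_measurable P" using g by auto
  have Sg: "S g n x = S f n x - real n * b" for n x
    unfolding S_def g_def by (simp add: sum_subtractf)
  have Wm: "W g \<in> sets P" by (rule W_sets[OF gm])
  have "measure P (W g) \<noteq> 1"
  proof
    assume "measure P (W g) = 1"
    then have "AE x in P. x \<in> W g" using AE_in_set_eq_1[OF Wm] by simp
    then have "AE x in P. \<exists>k. S g k x > 0"
    proof (rule AE_mp[OF _ AE_I2], intro impI)
      fix x assume "x \<in> W g"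
      then have "\<exists>n. S g n x > real (0::nat)" unfolding W_def by blast
      then show "\<exists>k. S g k x > 0" by simp
    qed
    then have "0 \<le> (\<integral>x. g x \<partial>P)" by (rule pos_if_full[OF g])
    also have "(\<integral>x. g x \<partial>P) = (\<integral>x. f x \<partial>P) - b"
      unfolding g_def using f by (simp add: prob_space)
    finally show False using b by simp
  qed
  then have "measure P (W g) = 0" using erg[OF Wm W_inv] by auto
  then have "W g \<in> null_sets P" using Wm by (simp add: emeasure_eq_measure null_setsI)
  then have "AE x in P. x \<notin> W g" by (rule AE_not_in)
  then show ?thesis
  proof (rule AE_mp[OF _ AE_I2[where P="\<lambda>x. x \<notin> W g \<longrightarrow> (\<exists>C. \<forall>n. S f n x - real n * b \<le> C)"]])
    fix x assume x: "x \<in> space P"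
    show "x \<notin> W g \<longrightarrow> (\<exists>C. \<forall>n. S f n x - real n * b \<le> C)"
    proof
      assume "x \<notin> W g"
      then obtain C :: nat where "\<forall>n. S g n x \<le> real C" using x unfolding W_def by (auto simp: not_less)
      then show "\<exists>C. \<forall>n. S f n x - real n * b \<le> C" using Sg by metis
    qed
  qed
qed

lemma S_uminus: "S (\<lambda>x. - f x) n x = - S f n x"
  unfolding S_def by (simp add: sum_negf)

lemma eventually_over_n:
  fixes C e :: real assumes "e > 0"
  shows "eventually (\<lambda>n. C / real n < e) sequentially"
proof -
  have "(\<lambda>n. C / real n) \<longlonglongrightarrow> 0"
    by (intro tendsto_divide_0[OF tendsto_const] filterlim_at_top_imp_at_infinity[OF filterlim_real_sequentially])
  then show ?thesis using assms by (rule order_tendstoD(2))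
qed

theorem birkhoff_ae:
  fixes f :: "'b \<Rightarrow> real"
  assumes erg: "\<And>A. A \<in> sets P \<Longrightarrow> T -` A \<inter> space P = A \<Longrightarrow> measure P A = 0 \<or> measure P A = 1"
    and f: "integrable P f"
  shows "AE x in P. (\<lambda>n. S f n x / real n) \<longlonglongrightarrow> (\<integral>x. f x \<partial>P)"
proof -
  define c where "c = (\<integral>x. f x \<partial>P)"
  have fm: "integrable P (\<lambda>x. - f x)" using f by auto
  have up: "AE x in P. \<forall>q::rat. of_rat q > c \<longrightarrow> (\<exists>C. \<forall>n. S f n x - real n * of_rat q \<le> C)"
    unfolding AE_all_countable
  proof
    fix q :: rat
    show "AE x in P. of_rat q > c \<longrightarrow> (\<exists>C. \<forall>n. S f n x - real n * of_rat q \<le> C)"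
    proof (cases "of_rat q > c")
      case True
      then show ?thesis using bounded_ae[OF erg f, of "of_rat q"] unfolding c_def
        by (auto elim: AE_mp)
    qed simp
  qed
  have lo: "AE x in P. \<forall>q::rat. of_rat q > - c \<longrightarrow> (\<exists>C. \<forall>n. - S f n x - real n * of_rat q \<le> C)"
    unfolding AE_all_countable
  proof
    fix q :: rat
    show "AE x in P. of_rat q > - c \<longrightarrow> (\<exists>C. \<forall>n. - S f n x - real n * of_rat q \<le> C)"
    proof (cases "of_rat q > - c")
      case True
      have "(\<integral>x. - f x \<partial>P) = - c" unfolding c_def by simp
      then show ?thesis using bounded_ae[OF erg fm, of "of_rat q"] True
        by (auto elim!: AE_mp simp: S_uminus)
    qed simp
  qed
  show ?thesis unfolding c_def[symmetric]
    using up lo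
  proof eventually_elim
    case (elim x)
    show ?case
    proof (rule tendstoI)
      fix e :: real assume e: "e > 0"
      obtain r1 where r1: "r1 \<in> \<rat>" "c < r1" "r1 < c + e/2" using Rats_dense_in_real[of c "c + e/2"] e by auto
      obtain q1 where q1: "r1 = of_rat q1" using r1(1) Rats_cases by blast
      obtain r2 where r2: "r2 \<in> \<rat>" "-c < r2" "r2 < -c + e/2" using Rats_dense_in_real[of "-c" "-c + e/2"] e by auto
      obtain q2 where q2: "r2 = of_rat q2" using r2(1) Rats_cases by blast
      obtain C1 where C1: "\<And>n. S f n x - real n * r1 \<le> C1" using elim(1) r1 q1 by blast
      obtain C2 where C2: "\<And>n. - S f n x - real n * r2 \<le> C2" using elim(2) r2 q2 by blast
      have e2: "e / 2 > 0" using e by simp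
      show "eventually (\<lambda>n. dist (S f n x / real n) c < e) sequentially"
        using eventually_over_n[OF e2, of C1] eventually_over_n[OF e2, of C2] eventually_ge_at_top[of 1]
      proof eventually_elim
        case (elim n)
        then have np: "real n > 0" by simp
        have "S f n x \<le> C1 + real n * r1" using C1[of n] by simp
        then have a: "S f n x / real n \<le> C1 / real n + r1" using np by (simp add: field_simps)
        have "- S f n x \<le> C2 + real n * r2" using C2[of n] by simp
        then have b: "- (S f n x / real n) \<le> C2 / real n + r2" using np by (simp add: field_simps)
        show ?case unfolding dist_real_def abs_less_iff using a b elim(1) elim(2) r1(2,3) r2(2,3) by linarith
      qed
    qed
  qed
qed

end


definition II :: "(real \<Rightarrow> real) \<Rightarrow> real \<Rightarrow> real \<Rightarrow> real" where
  "II f a b = interval_lebesgue_integral lborel (ereal a) (ereal b) f"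

definition IInt :: "(real \<Rightarrow> real) \<Rightarrow> real \<Rightarrow> real \<Rightarrow> bool" where
  "IInt f a b = set_integrable lborel {min a b..max a b} f"

lemma Ioo_Icc_int:
  fixes f :: "real \<Rightarrow> real"
  shows "set_integrable lborel {a<..<b} f \<longleftrightarrow> set_integrable lborel {a..b} f"
  unfolding set_integrable_def
proof (rule integrable_discrete_difference[where X="{a,b}"])
  fix x assume "x \<notin> {a,b}"
  then show "indicat_real {a<..<b} x *\<^sub>R f x = indicat_real {a..b} x *\<^sub>R f x"
    by (auto simp: indicator_def)
qed auto

lemma ii_int: "interval_lebesgue_integrable lborel (ereal a) (ereal b) f \<longleftrightarrow> IInt f a b"
  unfolding interval_lebesgue_integrable_def IInt_def
  by (auto simp: Ioo_Icc_int min_def max_def)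

lemma II_def2: "II f a b = (if a \<le> b then set_lebesgue_integral lborel {a<..<b} f
   else - set_lebesgue_integral lborel {b<..<a} f)"
  unfolding II_def interval_lebesgue_integral_def by simp

lemma II_nonint: assumes "\<not> IInt f a b" shows "II f a b = 0"
proof (cases "a \<le> b")
  case True
  then have "\<not> set_integrable lborel {a<..<b} f" using assms unfolding IInt_def by (simp add: Ioo_Icc_int)
  then show ?thesis using True unfolding II_def2 set_lebesgue_integral_def set_integrable_def
    by (simp add: not_integrable_integral_eq)
next
  case False
  then have "\<not> set_integrable lborel {b<..<a} f" using assms unfolding IInt_def by (simp add: Ioo_Icc_int)
  then show ?thesis using False unfolding II_def2 set_lebesgue_integral_def set_integrable_def
    by (simp add: not_integrable_integral_eq)
qed

lemma II_rev: "II f a b = - II f b a"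
  unfolding II_def by (rule interval_integral_endpoints_reverse)

lemma IInt_sub:
  assumes "set_integrable lborel {lo..hi} f" "a \<in> {lo..hi}" "b \<in> {lo..hi}"
  shows "IInt f a b"
  unfolding IInt_def by (rule set_integrable_subset[OF assms(1)]) (use assms in auto)

lemma II_sum:
  assumes "set_integrable lborel {lo..hi} f" "a \<in> {lo..hi}" "b \<in> {lo..hi}" "c \<in> {lo..hi}"
  shows "II f a b + II f b c = II f a c"
proof -
  have "IInt f (min a (min b c)) (max a (max b c))"
    by (rule IInt_sub[OF assms(1)]) (use assms in auto)
  then have "interval_lebesgue_integrable lborel (min (ereal a) (min (ereal b) (ereal c))) (max (ereal a) (max (ereal b) (ereal c))) f"
    using ii_int by (metis ereal_min ereal_max)
  then show ?thesis unfolding II_def by (rule interval_integral_sum)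
qed

lemma IInt_union:
  fixes a b c :: real and f :: "real \<Rightarrow> real"
  assumes "a \<le> b" "b \<le> c" "set_integrable lborel {a..b} f" "set_integrable lborel {b..c} f"
  shows "set_integrable lborel {a..c} f"
proof -
  have "{a..c} = {a..b} \<union> {b..c}" using assms(1,2) by auto
  then show ?thesis using set_integrable_Un[OF assms(3,4)] by auto
qed

lemma cont_F:
  fixes f :: "real \<Rightarrow> real"
  assumes "set_integrable lborel {p..q} f"
  shows "continuous_on {p..q} (\<lambda>z. II f p z)"
proof -
  have "f integrable_on {p..q}" using set_borel_integral_eq_integral(1)[OF assms] .
  then have c: "continuous_on {p..q} (\<lambda>z. integral {p..z} f)" by (rule indefinite_integral_continuous_1)
  show ?thesis
  proof (rule continuous_on_eq[OF c])
    fix z assume z: "z \<in> {p..q}"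
    have "set_integrable lborel {p..z} f" by (rule set_integrable_subset[OF assms]) (use z in auto)
    then show "integral {p..z} f = II f p z" unfolding II_def
      using interval_integral_eq_integral[of p z f] z by auto
  qed
qed

lemma isCont_local:
  assumes "open U" "x \<in> U" "continuous_on U g" "\<And>z. z \<in> U \<Longrightarrow> f z = g z"
  shows "isCont f x"
proof -
  have "continuous_on U f" using assms(3) by (rule continuous_on_eq) (use assms(4) in auto)
  then show ?thesis using assms(1,2) continuous_on_eq_continuous_at by blast
qed

lemma cont_upper:
  fixes f :: "real \<Rightarrow> real"
  assumes pq: "p < m0" "m0 < q" and f: "set_integrable lborel {p..q} f"
  shows "isCont (\<lambda>m. II f y m) m0"
proof -
  have cF: "continuous_on {p<..<q} (\<lambda>z. II f p z)"
    using cont_F[OF f] by (rule continuous_on_subset) auto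
  show ?thesis
  proof (cases "y < p")
    case True
    show ?thesis
    proof (rule isCont_local[of "{p<..<q}"])
      show "continuous_on {p<..<q} (\<lambda>m. if IInt f y p then II f y p + II f p m else 0)"
        using continuous_on_add[OF continuous_on_const cF] by (cases "IInt f y p") (auto intro: continuous_on_const)
      fix m assume m: "m \<in> {p<..<q}"
      show "II f y m = (if IInt f y p then II f y p + II f p m else 0)"
      proof (cases "IInt f y p")
        case yes: True
        have "set_integrable lborel {y..q} f"
          using IInt_union[of y p q f] yes True pq f unfolding IInt_def by auto
        then show ?thesis using yes II_sum[of y q f y p m] m True by auto
      next
        case no: False
        have "\<not> IInt f y m"
        proof
          assume "IInt f y m"
          then have "set_integrable lborel {y..m} f" using m True unfolding IInt_def by auto
          then have "set_integrable lborel {y..p} f" by (rule set_integrable_subset) (use m in auto)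
          then show False using no True unfolding IInt_def by auto
        qed
        then show ?thesis using no II_nonint by auto
      qed
    qed (use pq in auto)
  next
    case False
    show ?thesis
    proof (cases "y > q")
      case True
      show ?thesis
      proof (rule isCont_local[of "{p<..<q}"])
        show "continuous_on {p<..<q} (\<lambda>m. if IInt f q y then II f y q + (II f p m - II f p q) else 0)"
          using continuous_on_add[OF continuous_on_const continuous_on_diff[OF cF continuous_on_const]]
          by (cases "IInt f q y") (auto intro: continuous_on_const)
        fix m assume m: "m \<in> {p<..<q}"
        show "II f y m = (if IInt f q y then II f y q + (II f p m - II f p q) else 0)"
        proof (cases "IInt f q y")
          case yes: True
          have "set_integrable lborel {p..y} f"
            using IInt_union[of p q y f] yes True pq f unfolding IInt_def by auto
          then have "II f y q + II f q m = II f y m" using II_sum[of p y f y q m] m True pq by auto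
          moreover have "II f p q + II f q m = II f p m" using II_sum[of p q f p q m] m f pq by auto
          ultimately show ?thesis using yes by auto
        next
          case no: False
          have "\<not> IInt f y m"
          proof
            assume "IInt f y m"
            then have "set_integrable lborel {m..y} f" using m True unfolding IInt_def by auto
            then have "set_integrable lborel {q..y} f" by (rule set_integrable_subset) (use m in auto)
            then show False using no True unfolding IInt_def by auto
          qed
          then show ?thesis using no II_nonint by auto
        qed
      qed (use pq in auto)
    next
      case False2: False
      show ?thesis
      proof (rule isCont_local[of "{p<..<q}"])
        show "continuous_on {p<..<q} (\<lambda>m. II f p m - II f p y)"
          using continuous_on_diff[OF cF continuous_on_const] by simp
        fix m assume m: "m \<in> {p<..<q}"
        have "II f p y + II f y m = II f p m" using II_sum[of p q f p y m] m f False False2 pq by auto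
        then show "II f y m = II f p m - II f p y" by auto
      qed (use pq in auto)
    qed
  qed
qed

definition Iv :: "(real \<Rightarrow> real) \<Rightarrow> real \<Rightarrow> real \<Rightarrow> real" where
  "Iv h y m = II (\<lambda>w. (y - w) * h w) y m"

lemma int_mult_id:
  fixes h :: "real \<Rightarrow> real"
  assumes h: "set_integrable lborel {c..d} h"
  shows "set_integrable lborel {c..d} (\<lambda>w. w * h w)"
  unfolding set_integrable_def
proof (rule Bochner_Integration.integrable_bound)
  let ?g = "\<lambda>x. indicat_real {c..d} x *\<^sub>R h x"
  have gi: "integrable lborel ?g" using h unfolding set_integrable_def .
  show "integrable lborel (\<lambda>x. (\<bar>c\<bar> + \<bar>d\<bar>) * norm (?g x))" using gi by auto
  have gm: "?g \<in> borel_measurable lborel" using gi by auto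
  have "(\<lambda>x. x * ?g x) \<in> borel_measurable lborel" using gm by measurable
  moreover have "(\<lambda>x. indicat_real {c..d} x *\<^sub>R (x * h x)) = (\<lambda>x. x * ?g x)"
    by (auto simp: indicator_def)
  ultimately show "(\<lambda>x. indicat_real {c..d} x *\<^sub>R (x * h x)) \<in> borel_measurable lborel" by simp
  show "AE x in lborel. norm (indicat_real {c..d} x *\<^sub>R (x * h x)) \<le> norm ((\<bar>c\<bar> + \<bar>d\<bar>) * norm (?g x))"
  proof (rule AE_I2)
    fix x
    show "norm (indicat_real {c..d} x *\<^sub>R (x * h x)) \<le> norm ((\<bar>c\<bar> + \<bar>d\<bar>) * norm (?g x))"
    proof (cases "x \<in> {c..d}")
      case True
      then have "\<bar>x\<bar> \<le> \<bar>c\<bar> + \<bar>d\<bar>" by auto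
      then show ?thesis using True by (auto simp: abs_mult intro: mult_right_mono)
    qed simp
  qed
qed

lemma box_formula:
  fixes h :: "real \<Rightarrow> real"
  assumes h: "set_integrable lborel {c..d} h" and y: "y \<in> {c..d}" and m: "m \<in> {c..d}"
  shows "Iv h y m = y * (II h c m - II h c y) - (II (\<lambda>w. w * h w) c m - II (\<lambda>w. w * h w) c y)"
proof -
  have wh: "set_integrable lborel {c..d} (\<lambda>w. w * h w)" by (rule int_mult_id[OF h])
  have c: "c \<in> {c..d}" using y by auto
  have i1: "interval_lebesgue_integrable lborel (ereal y) (ereal m) h"
    using IInt_sub[OF h y m] ii_int by blast
  have i2: "interval_lebesgue_integrable lborel (ereal y) (ereal m) (\<lambda>w. w * h w)"
    using IInt_sub[OF wh y m] ii_int by blast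
  have "Iv h y m = II (\<lambda>w. y * h w - w * h w) y m"
    unfolding Iv_def by (simp add: algebra_simps)
  also have "\<dots> = y * II h y m - II (\<lambda>w. w * h w) y m"
    unfolding II_def using i1 i2 by (simp add: interval_lebesgue_integral_diff)
  also have "II h y m = II h c m - II h c y" using II_sum[OF h c y m] by simp
  also have "II (\<lambda>w. w * h w) y m = II (\<lambda>w. w * h w) c m - II (\<lambda>w. w * h w) c y"
    using II_sum[OF wh c y m] by simp
  finally show ?thesis .
qed

lemma box_cont:
  fixes h :: "real \<Rightarrow> real"
  assumes h: "set_integrable lborel {c..d} h" and y0: "c < y0" "y0 < d" and m: "m \<in> {c..d}"
  shows "isCont (\<lambda>y. Iv h y m) y0"
proof (rule isCont_local[of "{c<..<d}"])
  have wh: "set_integrable lborel {c..d} (\<lambda>w. w * h w)" by (rule int_mult_id[OF h])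
  have cH: "continuous_on {c<..<d} (\<lambda>z. II h c z)"
    using cont_F[OF h] by (rule continuous_on_subset) auto
  have cW: "continuous_on {c<..<d} (\<lambda>z. II (\<lambda>w. w * h w) c z)"
    using cont_F[OF wh] by (rule continuous_on_subset) auto
  show "continuous_on {c<..<d} (\<lambda>y. y * (II h c m - II h c y) - (II (\<lambda>w. w * h w) c m - II (\<lambda>w. w * h w) c y))"
    by (intro continuous_intros cH cW)
  fix z assume "z \<in> {c<..<d}"
  then show "Iv h z m = z * (II h c m - II h c z) - (II (\<lambda>w. w * h w) c m - II (\<lambda>w. w * h w) c z)"
    using box_formula[OF h _ m] by auto
qed (use y0 in auto)

lemma low_cont:
  fixes h :: "real \<Rightarrow> real"
  shows "\<exists>x0. \<forall>y<m. y \<noteq> x0 \<longrightarrow> isCont (\<lambda>y. Iv h y m) y"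
proof -
  define J where "J = {y. y < m \<and> IInt (\<lambda>w. (y - w) * h w) y m}"
  have "isCont (\<lambda>y. Iv h y m) y" if y: "y < m" "y \<noteq> Inf J" for y
  proof (cases "\<exists>y0\<in>J. y0 < y")
    case True
    then obtain y0 where y0: "y0 \<in> J" "y0 < y" by auto
    define y1 where "y1 = (y0 + y) / 2"
    have y1: "y0 < y1" "y1 < y" using y0 unfolding y1_def by auto
    define f0 where "f0 w = (y0 - w) * h w" for w
    have f0i: "set_integrable lborel {y0..m} f0" using y0 y unfolding J_def IInt_def f0_def by auto
    have "set_integrable lborel {y1..m} h"
      unfolding set_integrable_def
    proof (rule Bochner_Integration.integrable_bound)
      let ?g = "\<lambda>x. indicat_real {y0..m} x *\<^sub>R f0 x"
      have gi: "integrable lborel ?g" using f0i unfolding set_integrable_def .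
      show "integrable lborel (\<lambda>x. (1 / (y1 - y0)) * norm (?g x))" using gi by auto
      have gm: "?g \<in> borel_measurable lborel" using gi by auto
      have "(\<lambda>x. indicat_real {y1..m} x * ?g x / (y0 - x)) \<in> borel_measurable lborel" using gm by measurable
      moreover have "(\<lambda>x. indicat_real {y1..m} x *\<^sub>R h x) = (\<lambda>x. indicat_real {y1..m} x * ?g x / (y0 - x))"
      proof
        fix x show "indicat_real {y1..m} x *\<^sub>R h x = indicat_real {y1..m} x * ?g x / (y0 - x)"
          using y1 by (auto simp: indicator_def f0_def)
      qed
      ultimately show "(\<lambda>x. indicat_real {y1..m} x *\<^sub>R h x) \<in> borel_measurable lborel" by simp
      show "AE x in lborel. norm (indicat_real {y1..m} x *\<^sub>R h x) \<le> norm ((1 / (y1 - y0)) * norm (?g x))"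
      proof (rule AE_I2)
        fix x
        show "norm (indicat_real {y1..m} x *\<^sub>R h x) \<le> norm ((1 / (y1 - y0)) * norm (?g x))"
        proof (cases "x \<in> {y1..m}")
          case True
          then have x: "x - y0 \<ge> y1 - y0" "y1 - y0 > 0" using y1 by auto
          have "\<bar>h x\<bar> * (y1 - y0) \<le> \<bar>h x\<bar> * (x - y0)" using x by (intro mult_left_mono) auto
          then have "\<bar>h x\<bar> \<le> \<bar>h x\<bar> * \<bar>y0 - x\<bar> / (y1 - y0)" using x by (simp add: field_simps)
          then show ?thesis using True y1 by (auto simp: f0_def abs_mult indicator_def mult.commute)
        qed simp
      qed
    qed
    then show ?thesis by (rule box_cont) (use y1 y in auto)
  next
    case False
    then have lb: "\<And>z. z \<in> J \<Longrightarrow> y \<le> z" by force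
    show ?thesis
    proof (cases "J = {}")
      case True
      show ?thesis
      proof (rule isCont_local[of "{..<m}" _ "\<lambda>_. 0"])
        fix z assume "z \<in> {..<m}"
        then have "z \<notin> J" using True by auto
        then show "Iv h z m = 0" unfolding Iv_def using \<open>z \<in> {..<m}\<close> by (auto simp: J_def intro: II_nonint)
      qed (use y in auto)
    next
      case False
      have bdd: "bdd_below J" using lb by (auto simp: bdd_below_def)
      have "y \<le> Inf J" using False lb by (intro cInf_greatest) auto
      then have yl: "y < Inf J" using y by auto
      obtain j where j: "j \<in> J" using False by auto
      have "Inf J \<le> j" using cInf_lower[OF j bdd] .
      then have Im: "Inf J < m" using j by (auto simp: J_def)
      show ?thesis
      proof (rule isCont_local[of "{..<Inf J}" _ "\<lambda>_. 0"])
        fix z assume z: "z \<in> {..<Inf J}"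
        then have "z \<notin> J" using cInf_lower[OF _ bdd, of z] by force
        then show "Iv h z m = 0" unfolding Iv_def using z Im by (auto simp: J_def intro: II_nonint)
      qed (use yl in auto)
    qed
  qed
  then show ?thesis by blast
qed

lemma Iv_reflect: "Iv h y m = Iv (\<lambda>u. h (- u)) (- y) (- m)"
proof -
  have "Iv h y m = interval_lebesgue_integral lborel (- ereal m) (- ereal y) (\<lambda>u. (y + u) * h (- u))"
    unfolding Iv_def II_def by (subst interval_integral_reflect) simp
  also have "\<dots> = - interval_lebesgue_integral lborel (ereal (- y)) (ereal (- m)) (\<lambda>u. (y + u) * h (- u))"
    by (subst interval_integral_endpoints_reverse) simp
  also have "\<dots> = interval_lebesgue_integral lborel (ereal (- y)) (ereal (- m)) (\<lambda>u. - ((y + u) * h (- u)))"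
    by (simp add: interval_lebesgue_integral_uminus)
  also have "\<dots> = Iv (\<lambda>u. h (- u)) (- y) (- m)"
    unfolding Iv_def II_def
    by (rule arg_cong[where f="interval_lebesgue_integral lborel (ereal (- y)) (ereal (- m))"]) (auto simp: algebra_simps)
  finally show ?thesis .
qed

lemma high_cont:
  fixes h :: "real \<Rightarrow> real"
  shows "\<exists>x1. \<forall>y>m. y \<noteq> x1 \<longrightarrow> isCont (\<lambda>y. Iv h y m) y"
proof -
  obtain x0 where x0: "\<forall>y. y < - m \<longrightarrow> y \<noteq> x0 \<longrightarrow> isCont (\<lambda>y. Iv (\<lambda>u. h (- u)) y (- m)) y"
    using low_cont by blast
  have "isCont (\<lambda>y. Iv h y m) y" if "y > m" "y \<noteq> - x0" for y
  proof -
    have c: "isCont (\<lambda>y. Iv (\<lambda>u. h (- u)) y (- m)) (- y)" using x0 that by auto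
    have "isCont (\<lambda>y. Iv (\<lambda>u. h (- u)) (- y) (- m)) y"
      using isCont_o2[OF continuous_minus[OF continuous_ident] c] by simp
    then show ?thesis by (subst Iv_reflect) simp
  qed
  then show ?thesis by blast
qed

lemma mid_cont:
  fixes h :: "real \<Rightarrow> real"
  assumes "open D" "continuous_on D h" "m \<in> D"
  shows "isCont (\<lambda>y. Iv h y m) m"
proof -
  obtain e where e: "e > 0" "cball m e \<subseteq> D" using assms open_contains_cball by blast
  have "{m - e..m + e} \<subseteq> D" using e cball_eq_atLeastAtMost[of m e] by (auto simp: dist_real_def)
  then have "set_integrable lborel {m - e..m + e} h"
    by (intro borel_integrable_atLeastAtMost' continuous_on_subset[OF assms(2)])
  then show ?thesis by (rule box_cont) (use e in auto)
qed

lemma Iv_meas_y: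
  fixes h :: "real \<Rightarrow> real"
  assumes "open D" "continuous_on D h" "m \<in> D"
  shows "(\<lambda>y. Iv h y m) \<in> borel_measurable borel"
proof -
  obtain x0 where x0: "\<forall>y<m. y \<noteq> x0 \<longrightarrow> isCont (\<lambda>y. Iv h y m) y" using low_cont by blast
  obtain x1 where x1: "\<forall>y>m. y \<noteq> x1 \<longrightarrow> isCont (\<lambda>y. Iv h y m) y" using high_cont by blast
  have "continuous_on (- {x0, x1}) (\<lambda>y. Iv h y m)"
  proof (rule continuous_at_imp_continuous_on, intro ballI)
    fix y assume y: "y \<in> - {x0, x1}"
    consider "y < m" | "y = m" | "y > m" by fastforce
    then show "isCont (\<lambda>y. Iv h y m) y"
      by cases (use x0 x1 y mid_cont[OF assms] in auto)
  qed
  then show ?thesis by (intro borel_measurable_continuous_countable_exceptions[of "{x0, x1}"]) auto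
qed

lemma Iv_cont_m:
  fixes h :: "real \<Rightarrow> real"
  assumes "open D" "continuous_on D h" "m0 \<in> D"
  shows "isCont (\<lambda>m. Iv h y m) m0"
proof -
  obtain e where e: "e > 0" "cball m0 e \<subseteq> D" using assms open_contains_cball by blast
  have "{m0 - e..m0 + e} \<subseteq> D" using e cball_eq_atLeastAtMost[of m0 e] by (auto simp: dist_real_def)
  then have si: "set_integrable lborel {m0 - e..m0 + e} (\<lambda>w. (y - w) * h w)"
    by (intro borel_integrable_atLeastAtMost' continuous_intros continuous_on_subset[OF assms(2)])
  have "isCont (\<lambda>m. II (\<lambda>w. (y - w) * h w) y m) m0" using e by (intro cont_upper[OF _ _ si]) auto
  then show ?thesis unfolding Iv_def .
qed

lemma floor_approx: "(\<lambda>k. real_of_int \<lfloor>real (Suc k) * z\<rfloor> / real (Suc k)) \<longlonglongrightarrow> (z::real)"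
proof -
  have b: "\<bar>real_of_int \<lfloor>real (Suc k) * z\<rfloor> / real (Suc k) - z\<bar> \<le> 1 / real (Suc k)" for k
  proof -
    define n where "n = real (Suc k)"
    define a where "a = real_of_int \<lfloor>n * z\<rfloor>"
    have n: "n > 0" unfolding n_def by simp
    have "a \<le> n * z" "n * z < a + 1" unfolding a_def by linarith+
    then have "\<bar>a - n * z\<bar> \<le> 1" by linarith
    moreover have "\<bar>a / n - z\<bar> = \<bar>a - n * z\<bar> / n" using n by (simp add: field_simps)
    ultimately have "\<bar>a / n - z\<bar> \<le> 1 / n" using n by (simp add: divide_right_mono)
    then show ?thesis unfolding a_def n_def .
  qed
  have "(\<lambda>k. 1 / real (Suc k)) \<longlonglongrightarrow> 0" by (rule LIMSEQ_Suc[OF lim_const_over_n])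
  then have "(\<lambda>k. real_of_int \<lfloor>real (Suc k) * z\<rfloor> / real (Suc k) - z) \<longlonglongrightarrow> 0"
    by (rule Lim_null_comparison[rotated]) (use b in auto)
  then show ?thesis by (simp add: LIM_zero_iff)
qed

lemma carath_meas:
  fixes F :: "real \<Rightarrow> real \<Rightarrow> real" and N :: "'c measure"
  assumes D: "open D" and Fy: "\<And>m. m \<in> D \<Longrightarrow> (\<lambda>y. F y m) \<in> borel_measurable borel"
    and Fm: "\<And>y m. m \<in> D \<Longrightarrow> isCont (F y) m"
    and Y: "Y \<in> borel_measurable N" and Mu: "Mu \<in> borel_measurable N"
    and inD: "\<And>x. x \<in> space N \<Longrightarrow> Mu x \<in> D"
  shows "(\<lambda>x. F (Y x) (Mu x)) \<in> borel_measurable N"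
proof (rule borel_measurable_LIMSEQ_real)
  define F' where "F' y z = (if z \<in> D then F y z else 0)" for y z
  define G where "G k x = F' (Y x) (real_of_int \<lfloor>real (Suc k) * Mu x\<rfloor> / real (Suc k))" for k x
  show "G k \<in> borel_measurable N" for k
  proof -
    have "(\<lambda>x. (\<lambda>i::int. F' (Y x) (real_of_int i / real (Suc k))) (\<lfloor>real (Suc k) * Mu x\<rfloor>)) \<in> borel_measurable N"
    proof (rule measurable_compose_countable[where f="\<lambda>i x. F' (Y x) (real_of_int i / real (Suc k))"])
      fix i :: int
      show "(\<lambda>x. F' (Y x) (real_of_int i / real (Suc k))) \<in> borel_measurable N"
      proof (cases "real_of_int i / real (Suc k) \<in> D")
        case True
        then show ?thesis unfolding F'_def using measurable_compose[OF Y Fy[OF True]] by simp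
      qed (simp add: F'_def)
    next
      show "(\<lambda>x. \<lfloor>real (Suc k) * Mu x\<rfloor>) \<in> measurable N (count_space UNIV)"
        using Mu by measurable
    qed
    then show ?thesis unfolding G_def by simp
  qed
  fix x assume x: "x \<in> space N"
  have lim: "(\<lambda>k. real_of_int \<lfloor>real (Suc k) * Mu x\<rfloor> / real (Suc k)) \<longlonglongrightarrow> Mu x" by (rule floor_approx)
  have ev: "eventually (\<lambda>k. real_of_int \<lfloor>real (Suc k) * Mu x\<rfloor> / real (Suc k) \<in> D) sequentially"
    using topological_tendstoD[OF lim D inD[OF x]] .
  have "(\<lambda>k. F (Y x) (real_of_int \<lfloor>real (Suc k) * Mu x\<rfloor> / real (Suc k))) \<longlonglongrightarrow> F (Y x) (Mu x)"
    by (rule isCont_tendsto_compose[OF Fm[OF inD[OF x]] lim])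
  then show "(\<lambda>k. G k x) \<longlonglongrightarrow> F (Y x) (Mu x)"
    by (rule Lim_transform_eventually) (use ev in \<open>auto simp: G_def F'_def elim: eventually_mono\<close>)
qed



lemma conv_in_prob:
  fixes f :: "nat \<Rightarrow> 'c \<Rightarrow> real"
  assumes pM: "prob_space M" and fm: "\<And>n. f n \<in> borel_measurable M"
    and ae: "AE w in M. (\<lambda>n. f n w) \<longlonglongrightarrow> c" and d: "d > 0"
  shows "(\<lambda>n. measure M {w \<in> space M. d \<le> \<bar>f n w - c\<bar>}) \<longlonglongrightarrow> 0"
proof -
  interpret prob_space M by (rule pM)
  define A where "A n = {w \<in> space M. d \<le> \<bar>f n w - c\<bar>}" for n
  have As: "A n \<in> sets M" for n unfolding A_def using fm[of n] by measurable
  have "(\<lambda>n. \<integral>w. (indicator (A n) w :: real) \<partial>M) \<longlonglongrightarrow> (\<integral>w. (0::real) \<partial>M)"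
  proof (rule integral_dominated_convergence[where w="\<lambda>_. 1"])
    show "AE w in M. (\<lambda>n. indicator (A n) w :: real) \<longlonglongrightarrow> 0"
      using ae
    proof (rule AE_mp, intro AE_I2 impI)
      fix w assume w: "w \<in> space M" and l: "(\<lambda>n. f n w) \<longlonglongrightarrow> c"
      have "eventually (\<lambda>n. dist (f n w) c < d) sequentially" using tendstoD[OF l d] .
      then have "eventually (\<lambda>n. indicator (A n) w = (0::real)) sequentially"
        by (rule eventually_mono) (auto simp: A_def dist_real_def indicator_def)
      then show "(\<lambda>n. indicator (A n) w :: real) \<longlonglongrightarrow> 0" by (rule tendsto_eventually)
    qed
    show "AE w in M. norm (indicator (A n) w :: real) \<le> 1" for n by (auto simp: indicator_def)
  qed (use As in auto)
  then show ?thesis using As by (simp add: measure_def[symmetric] A_def[symmetric])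
qed

locale cons_setup = mpres P T for P :: "'p measure" and T +
  fixes M :: "'a measure" and jp :: "'a \<Rightarrow> 'p"
    and q :: "'th::second_countable_topology \<Rightarrow> 'p \<Rightarrow> real" and Th :: "'th set" and th0 :: 'th
    and rho :: "'th \<Rightarrow> 'th \<Rightarrow> real"
  assumes erg: "\<And>A. A \<in> sets P \<Longrightarrow> T -` A \<inter> space P = A \<Longrightarrow> measure P A = 0 \<or> measure P A = 1"
    and probM: "prob_space M"
    and jpm: "jp \<in> measurable M P" and jpd: "distr M P jp = P"
    and qm: "\<And>th. th \<in> Th \<Longrightarrow> q th \<in> borel_measurable P"
    and qc: "\<And>th x c. th \<in> Th \<Longrightarrow> (\<And>k. c k \<in> Th) \<Longrightarrow> (\<lambda>k. rho (c k) th) \<longlonglongrightarrow> 0 \<Longrightarrow> (\<lambda>k. q (c k) x) \<longlonglongrightarrow> q th x"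
    and C1: "(\<integral>\<^sup>+ w. (SUP th\<in>Th. ennreal \<bar>q th (jp w)\<bar>) \<partial>M) < \<infinity>"
    and C2: "\<And>th. th \<in> Th \<Longrightarrow> th \<noteq> th0 \<Longrightarrow> (\<integral>x. - q th0 x \<partial>P) < (\<integral>x. - q th x \<partial>P)"
    and cpt: "compact Th" and th0: "th0 \<in> Th"
    and rhoc: "\<And>th. continuous_on UNIV (\<lambda>th'. rho th' th)" and rho0: "\<And>th. rho th th = 0"
    and rho_nn: "\<And>th th'. rho th th' \<ge> 0"
begin

lemma dense_exists: "\<exists>C. countable C \<and> C \<subseteq> Th \<and> (\<forall>th\<in>Th. \<forall>U. open U \<longrightarrow> th \<in> U \<longrightarrow> (\<exists>c\<in>C. c \<in> U))"
proof -
  obtain B :: "'th set set" where B: "countable B" "topological_basis B" using ex_countable_basis by blast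
  define C where "C = (\<lambda>b. SOME x. x \<in> b \<inter> Th) ` {b\<in>B. b \<inter> Th \<noteq> {}}"
  have some: "(SOME x. x \<in> b \<inter> Th) \<in> b \<inter> Th" if "b \<inter> Th \<noteq> {}" for b
  proof -
    from that obtain x where "x \<in> b \<inter> Th" by blast
    then show ?thesis by (rule someI)
  qed
  have c1: "countable C" unfolding C_def
    by (rule countable_image) (rule countable_subset[OF _ B(1)], blast)
  have c2: "C \<subseteq> Th"
  proof
    fix c assume "c \<in> C"
    then obtain b where "b \<inter> Th \<noteq> {}" "c = (SOME x. x \<in> b \<inter> Th)" unfolding C_def by blast
    then show "c \<in> Th" using some by blast
  qed
  have c3: "\<exists>c\<in>C. c \<in> U" if th: "th \<in> Th" "open U" "th \<in> U" for th U
  proof -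
    obtain b where b: "b \<in> B" "th \<in> b" "b \<subseteq> U" using topological_basisE[OF B(2) th(2,3)] by blast
    then have bT: "b \<inter> Th \<noteq> {}" using th(1) by blast
    let ?c = "SOME x. x \<in> b \<inter> Th"
    have "?c \<in> b \<inter> Th" using some[OF bT] .
    moreover have "?c \<in> C" unfolding C_def using bT b by blast
    ultimately show ?thesis using b by blast
  qed
  show ?thesis by (rule exI[of _ C]) (use c1 c2 c3 in blast)
qed

definition Cd :: "'th set" where
  "Cd = (SOME C. countable C \<and> C \<subseteq> Th \<and> (\<forall>th\<in>Th. \<forall>U. open U \<longrightarrow> th \<in> U \<longrightarrow> (\<exists>c\<in>C. c \<in> U)))"

lemma Cd_all: "countable Cd \<and> Cd \<subseteq> Th \<and> (\<forall>th\<in>Th. \<forall>U. open U \<longrightarrow> th \<in> U \<longrightarrow> (\<exists>c\<in>Cd. c \<in> U))"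
  unfolding Cd_def by (rule someI_ex[OF dense_exists])

lemma Cd: "countable Cd" "Cd \<subseteq> Th" "\<And>th U. th \<in> Th \<Longrightarrow> open U \<Longrightarrow> th \<in> U \<Longrightarrow> \<exists>c\<in>Cd. c \<in> U"
  using Cd_all by simp_all

lemma open_ball_rho: "open {th'. rho th' th < r}"
  using rhoc[of th] by (intro open_Collect_less) (auto intro: continuous_on_const)

lemma dense_seq:
  assumes "th \<in> Th" "open U" "th \<in> U"
  shows "\<exists>c. \<forall>k. c k \<in> Cd \<and> c k \<in> U \<and> rho (c k) th < 1 / Suc k"
proof -
  have "\<exists>c\<in>Cd. c \<in> U \<inter> {th'. rho th' th < 1 / Suc k}" for k
    using assms rho0[of th] by (intro Cd(3) open_Int open_ball_rho) auto
  then have "\<forall>k. \<exists>c. c \<in> Cd \<and> c \<in> U \<and> rho c th < 1 / Suc k" by blast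
  then show ?thesis by (rule choice)
qed

lemma seq_to0: assumes "\<And>k. rho (c k) th < 1 / Suc k" shows "(\<lambda>k. rho (c k) th) \<longlonglongrightarrow> 0"
proof (rule tendsto_sandwich[where f="\<lambda>_. 0" and h="\<lambda>k. 1 / Suc k"])
  show "eventually (\<lambda>n. 0 \<le> rho (c n) th) sequentially" using rho_nn by (intro always_eventually) auto
  show "eventually (\<lambda>n. rho (c n) th \<le> 1 / Suc n) sequentially" using assms by (intro always_eventually) (auto intro: less_imp_le)
  show "(\<lambda>n. 1 / real (Suc n)) \<longlonglongrightarrow> 0" by (rule LIMSEQ_Suc[OF lim_const_over_n])
qed simp

definition G :: "'p \<Rightarrow> ennreal" where
  "G x = (SUP c\<in>Cd. ennreal \<bar>q c x\<bar>)"

lemma Gm[measurable]: "G \<in> borel_measurable P"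
  unfolding G_def using Cd qm by (intro borel_measurable_SUP) auto

lemma G_int: "(\<integral>\<^sup>+ x. G x \<partial>P) < \<infinity>"
proof -
  have "(\<integral>\<^sup>+ x. G x \<partial>P) = (\<integral>\<^sup>+ x. G x \<partial>distr M P jp)" by (simp add: jpd)
  also have "\<dots> = (\<integral>\<^sup>+ w. G (jp w) \<partial>M)" by (rule nn_integral_distr[OF jpm]) (simp add: jpd)
  also have "\<dots> \<le> (\<integral>\<^sup>+ w. (SUP th\<in>Th. ennreal \<bar>q th (jp w)\<bar>) \<partial>M)"
    unfolding G_def using Cd(2) by (intro nn_integral_mono SUP_subset_mono) auto
  finally show ?thesis using C1 by (simp add: order_le_less_trans)
qed

lemma G_fin: "AE x in P. G x \<noteq> \<infinity>"
  using G_int by (intro nn_integral_noteq_infinite) auto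

definition gb :: "'p \<Rightarrow> real" where "gb x = enn2real (G x)"

lemma gb_int: "integrable P gb"
proof (rule integrableI_bounded)
  show "gb \<in> borel_measurable P" unfolding gb_def by measurable
  have "(\<integral>\<^sup>+ x. ennreal (norm (gb x)) \<partial>P) \<le> (\<integral>\<^sup>+ x. G x \<partial>P)"
    unfolding gb_def by (intro nn_integral_mono) (simp add: ennreal_enn2real_if)
  then show "(\<integral>\<^sup>+ x. ennreal (norm (gb x)) \<partial>P) < \<infinity>" using G_int by (simp add: order_le_less_trans)
qed

lemma gb_bound_Cd: "G x \<noteq> \<infinity> \<Longrightarrow> c \<in> Cd \<Longrightarrow> \<bar>q c x\<bar> \<le> gb x"
proof -
  assume G: "G x \<noteq> \<infinity>" and c: "c \<in> Cd"
  have "ennreal \<bar>q c x\<bar> \<le> G x" unfolding G_def using c by (rule SUP_upper)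
  then have "enn2real (ennreal \<bar>q c x\<bar>) \<le> enn2real (G x)" using G by (intro enn2real_mono) (simp_all add: less_top)
  then show ?thesis unfolding gb_def by simp
qed

lemma gb_bound: "G x \<noteq> \<infinity> \<Longrightarrow> th \<in> Th \<Longrightarrow> \<bar>q th x\<bar> \<le> gb x"
proof -
  assume G: "G x \<noteq> \<infinity>" and th: "th \<in> Th"
  obtain c where c: "\<And>k. c k \<in> Cd \<and> rho (c k) th < 1 / Suc k" using dense_seq[OF th, of UNIV] by auto
  have "(\<lambda>k. q (c k) x) \<longlonglongrightarrow> q th x"
    using c Cd(2) by (intro qc th seq_to0) auto
  then have "(\<lambda>k. \<bar>q (c k) x\<bar>) \<longlonglongrightarrow> \<bar>q th x\<bar>" by (rule tendsto_rabs)
  then show ?thesis by (rule LIMSEQ_le_const2) (use gb_bound_Cd[OF G] c in blast)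
qed

lemma gb_nn: "gb x \<ge> 0" unfolding gb_def by simp

lemma q_int: assumes th: "th \<in> Th" shows "integrable P (q th)"
proof (rule Bochner_Integration.integrable_bound[OF gb_int qm[OF th]])
  show "AE x in P. norm (q th x) \<le> norm (gb x)"
    using G_fin by (rule AE_mp) (intro AE_I2 impI, use gb_bound[OF _ th] gb_nn in simp)
qed

definition Cj :: "'th \<Rightarrow> nat \<Rightarrow> 'th set" where
  "Cj th j = {c \<in> Cd. rho c th < 1 / Suc j}"

definition F :: "'th \<Rightarrow> nat \<Rightarrow> 'p \<Rightarrow> real" where
  "F th j x = (INF c\<in>Cj th j. - q c x)"

lemma Cj_ne: assumes "th \<in> Th" shows "Cj th j \<noteq> {}"
proof -
  have "\<exists>c\<in>Cd. c \<in> {th'. rho th' th < 1 / Suc j}"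
    using assms open_ball_rho rho0[of th] by (intro Cd(3)) auto
  then show ?thesis unfolding Cj_def by blast
qed

lemma Fm[measurable]: "F th j \<in> borel_measurable P"
  unfolding F_def
proof (rule borel_measurable_cINF_real)
  show "countable (Cj th j)" unfolding Cj_def using Cd(1) by (rule countable_subset[rotated]) auto
  fix c assume "c \<in> Cj th j"
  then have "c \<in> Th" unfolding Cj_def using Cd(2) by auto
  then show "(\<lambda>x. - q c x) \<in> borel_measurable P" using qm by auto
qed

lemma bdd_Cj: assumes G: "G x \<noteq> \<infinity>" shows "bdd_below ((\<lambda>c. - q c x) ` Cj th j)"
proof (rule bdd_belowI)
  fix v assume "v \<in> (\<lambda>c. - q c x) ` Cj th j"
  then obtain c where "c \<in> Cd" "v = - q c x" unfolding Cj_def by blast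
  then show "- gb x \<le> v" using gb_bound_Cd[OF G, of c] by (simp add: abs_le_iff)
qed

lemma F_le:
  assumes G: "G x \<noteq> \<infinity>" and th': "th' \<in> Th" and r: "rho th' th < 1 / Suc j"
  shows "F th j x \<le> - q th' x"
proof -
  obtain c where c: "\<And>k. c k \<in> Cd \<and> c k \<in> {th''. rho th'' th < 1 / Suc j} \<and> rho (c k) th' < 1 / Suc k"
    using dense_seq[OF th' open_ball_rho, of th "1 / Suc j"] r by auto
  have "(\<lambda>k. q (c k) x) \<longlonglongrightarrow> q th' x"
    using c Cd(2) by (intro qc th' seq_to0) auto
  then have lim: "(\<lambda>k. - q (c k) x) \<longlonglongrightarrow> - q th' x" by (rule tendsto_minus)
  have "F th j x \<le> - q (c k) x" for k
    unfolding F_def using c[of k] by (intro cINF_lower bdd_Cj[OF G]) (auto simp: Cj_def)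
  then show ?thesis by (intro LIMSEQ_le_const[OF lim]) auto
qed

lemma F_bound:
  assumes G: "G x \<noteq> \<infinity>" and th: "th \<in> Th"
  shows "\<bar>F th j x\<bar> \<le> gb x"
proof -
  have lo: "- gb x \<le> F th j x"
    unfolding F_def using gb_bound_Cd[OF G] Cj_ne[OF th]
    by (intro cINF_greatest) (auto simp: Cj_def abs_le_iff)
  obtain c where c: "c \<in> Cj th j" using Cj_ne[OF th] by auto
  have "F th j x \<le> - q c x" unfolding F_def by (intro cINF_lower bdd_Cj[OF G] c)
  also have "\<dots> \<le> gb x" using gb_bound_Cd[OF G, of c] c by (auto simp: Cj_def abs_le_iff)
  finally show ?thesis using lo by auto
qed

lemma F_lim:
  assumes G: "G x \<noteq> \<infinity>" and th: "th \<in> Th"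
  shows "(\<lambda>j. F th j x) \<longlonglongrightarrow> - q th x"
proof -
  have ex: "\<exists>c. c \<in> Cj th j \<and> - q c x < F th j x + 1 / Suc j" for j
  proof -
    have lt: "Inf ((\<lambda>c. - q c x) ` Cj th j) < F th j x + 1 / Suc j" unfolding F_def by simp
    have ne: "(\<lambda>c. - q c x) ` Cj th j \<noteq> {}" using Cj_ne[OF th] by simp
    have "\<exists>v\<in>(\<lambda>c. - q c x) ` Cj th j. v < F th j x + 1 / Suc j" by (rule cInf_lessD[OF ne lt])
    then obtain c where "c \<in> Cj th j" "- q c x < F th j x + 1 / Suc j" by (elim bexE imageE) simp
    then show ?thesis by blast
  qed
  have "\<forall>j. \<exists>c. c \<in> Cj th j \<and> - q c x < F th j x + 1 / Suc j" using ex by (rule allI)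
  then have "\<exists>c. \<forall>j. c j \<in> Cj th j \<and> - q (c j) x < F th j x + 1 / Suc j" by (rule choice)
  then obtain c where c0: "\<forall>j. c j \<in> Cj th j \<and> - q (c j) x < F th j x + 1 / Suc j" by (elim exE)
  have c: "c j \<in> Cj th j \<and> - q (c j) x < F th j x + 1 / Suc j" for j using c0 by (rule spec)
  have "(\<lambda>j. q (c j) x) \<longlonglongrightarrow> q th x"
    using c Cd(2) by (intro qc th seq_to0) (auto simp: Cj_def)
  moreover have "(\<lambda>j. 1 / real (Suc j)) \<longlonglongrightarrow> 0" by (rule LIMSEQ_Suc[OF lim_const_over_n])
  ultimately have l1: "(\<lambda>j. - q (c j) x - 1 / Suc j) \<longlonglongrightarrow> - q th x - 0"
    by (intro tendsto_diff tendsto_minus)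
  show ?thesis
  proof (rule tendsto_sandwich)
    have "- q (c j) x - 1 / Suc j \<le> F th j x" for j using c[of j] by linarith
    then show "eventually (\<lambda>j. - q (c j) x - 1 / Suc j \<le> F th j x) sequentially"
      by (intro always_eventually allI)
    have "F th j x \<le> - q th x" for j using F_le[OF G th, of th j] rho0[of th] by simp
    then show "eventually (\<lambda>j. F th j x \<le> - q th x) sequentially"
      by (intro always_eventually allI)
    show "(\<lambda>j. - q (c j) x - 1 / Suc j) \<longlonglongrightarrow> - q th x" using l1 by simp
  qed simp
qed

lemma F_int: assumes th: "th \<in> Th" shows "integrable P (F th j)"
proof (rule Bochner_Integration.integrable_bound[OF gb_int Fm])
  show "AE x in P. norm (F th j x) \<le> norm (gb x)"
    using G_fin by (rule AE_mp) (intro AE_I2 impI, use F_bound[OF _ th] gb_nn in simp)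
qed

lemma F_int_lim:
  assumes th: "th \<in> Th"
  shows "(\<lambda>j. \<integral>x. F th j x \<partial>P) \<longlonglongrightarrow> (\<integral>x. - q th x \<partial>P)"
proof (rule integral_dominated_convergence[where w=gb])
  show "(\<lambda>x. - q th x) \<in> borel_measurable P" using qm[OF th] by measurable
  show "AE x in P. (\<lambda>j. F th j x) \<longlonglongrightarrow> - q th x"
    using G_fin by (rule AE_mp) (intro AE_I2 impI F_lim th)
  show "AE x in P. norm (F th j x) \<le> gb x" for j
    using G_fin by (rule AE_mp) (intro AE_I2 impI, simp add: F_bound th)
qed (use gb_int in auto)

lemma sum_window:
  assumes "m \<le> n"
  shows "(\<Sum>t\<in>{m<..n}. g ((T ^^ t) x)) = S g (Suc n) x - S g (Suc m) x"
proof -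
  have "S g (Suc m) x + (\<Sum>t\<in>{Suc m..<Suc n}. g ((T ^^ t) x)) = S g (Suc n) x"
    unfolding S_def lessThan_atLeast0 using assms by (intro sum.atLeastLessThan_concat) auto
  moreover have "{m<..n} = {Suc m..<Suc n}" by auto
  ultimately show ?thesis by simp
qed

lemma window_avg:
  assumes l: "(\<lambda>N. S g N x / real N) \<longlonglongrightarrow> c"
  shows "(\<lambda>n. (\<Sum>t\<in>{m<..n}. g ((T ^^ t) x)) / real (n - m)) \<longlonglongrightarrow> c"
proof (rule LIMSEQ_offset[where k="Suc m"])
  have l2: "(\<lambda>k. S g (k + Suc (Suc m)) x / real (k + Suc (Suc m))) \<longlonglongrightarrow> c"
    using LIMSEQ_ignore_initial_segment[OF l, of "Suc (Suc m)"] .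
  have r: "(\<lambda>k. 1 + real (Suc m) * (1 / real (Suc k))) \<longlonglongrightarrow> 1 + real (Suc m) * 0"
    by (intro tendsto_add tendsto_mult tendsto_const LIMSEQ_Suc[OF lim_const_over_n])
  have z: "(\<lambda>k. S g (Suc m) x * (1 / real (Suc k))) \<longlonglongrightarrow> S g (Suc m) x * 0"
    by (intro tendsto_mult tendsto_const LIMSEQ_Suc[OF lim_const_over_n])
  have "(\<lambda>k. (1 + real (Suc m) * (1 / real (Suc k))) * (S g (k + Suc (Suc m)) x / real (k + Suc (Suc m)))
      - S g (Suc m) x * (1 / real (Suc k))) \<longlonglongrightarrow> (1 + real (Suc m) * 0) * c - S g (Suc m) x * 0"
    by (intro tendsto_diff tendsto_mult r l2 z)
  moreover have "(1 + real (Suc m) * (1 / real (Suc k))) * (S g (k + Suc (Suc m)) x / real (k + Suc (Suc m)))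
      - S g (Suc m) x * (1 / real (Suc k))
      = (\<Sum>t\<in>{m<..k + Suc m}. g ((T ^^ t) x)) / real (k + Suc m - m)" for k
  proof -
    define a where "a = S g (k + Suc (Suc m)) x"
    define b where "b = S g (Suc m) x"
    define K where "K = real (Suc k)"
    define N where "N = real (k + Suc (Suc m))"
    have K: "K > 0" unfolding K_def by simp
    have N: "N > 0" unfolding N_def by simp
    have e1: "k + Suc m - m = Suc k" by simp
    have e2: "(\<Sum>t\<in>{m<..k + Suc m}. g ((T ^^ t) x)) = a - b"
      unfolding a_def b_def using sum_window[of m "k + Suc m" g x] by (simp add: add.commute)
    have e3: "1 + real (Suc m) * (1 / real (Suc k)) = N / K"
      unfolding N_def K_def by (simp add: field_simps)
    have "(N / K) * (a / N) - b * (1 / K) = (a - b) / K" using K N by (simp add: field_simps)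
    then show ?thesis unfolding e1 e2 e3 using K_def a_def b_def N_def by simp
  qed
  ultimately show "(\<lambda>k. (\<Sum>t\<in>{m<..k + Suc m}. g ((T ^^ t) x)) / real (k + Suc m - m)) \<longlonglongrightarrow> c"
    by simp
qed

lemma Tk_space: "x \<in> space P \<Longrightarrow> (T ^^ t) x \<in> space P"
  using Tk_meas[of t] by (auto simp: measurable_def)

lemma G_fin_all: "AE x in P. \<forall>t. G ((T ^^ t) x) \<noteq> \<infinity>"
  unfolding AE_all_countable
proof
  fix t
  have "AE x in distr P P (T ^^ t). G x \<noteq> \<infinity>" unfolding Tk_pres by (rule G_fin)
  then show "AE x in P. G ((T ^^ t) x) \<noteq> \<infinity>"
    by (subst (asm) AE_distr_iff[OF Tk_meas]) auto
qed

theorem consistency: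
  fixes thh :: "nat \<Rightarrow> 'a \<Rightarrow> 'th" and m :: nat and e :: real
  assumes qmle: "\<And>n w. w \<in> space M \<Longrightarrow> thh n w \<in> Th \<and> (\<forall>th\<in>Th.
       (\<Sum>t\<in>{m<..n}. - q (thh n w) ((T ^^ t) (jp w))) \<le> (\<Sum>t\<in>{m<..n}. - q th ((T ^^ t) (jp w))))"
    and e: "e > 0"
  shows "(\<lambda>n. measure M {w \<in> space M. rho (thh n w) th0 > e}) \<longlonglongrightarrow> 0"
proof -
  interpret pP: prob_space P by (rule prob)
  interpret pM: prob_space M by (rule probM)
  define c0 where "c0 = (\<integral>x. - q th0 x \<partial>P)"
  define K where "K = {th \<in> Th. e \<le> rho th th0}"
  have Kc: "compact K"
  proof -
    have "closed {th. e \<le> rho th th0}" by (rule closed_Collect_le[OF continuous_on_const rhoc])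
    then have "compact (Th \<inter> {th. e \<le> rho th th0})" by (rule compact_Int_closed[OF cpt])
    moreover have "K = Th \<inter> {th. e \<le> rho th th0}" unfolding K_def by blast
    ultimately show ?thesis by simp
  qed
  have exj: "\<exists>j. (\<integral>x. F th j x \<partial>P) > c0" if th: "th \<in> K" for th
  proof -
    have thT: "th \<in> Th" and ne: "th \<noteq> th0" using th e rho0[of th0] unfolding K_def by auto
    have "c0 < (\<integral>x. - q th x \<partial>P)" unfolding c0_def by (rule C2[OF thT ne])
    from order_tendstoD(1)[OF F_int_lim[OF thT] this]
    have "eventually (\<lambda>j. c0 < (\<integral>x. F th j x \<partial>P)) sequentially" .
    then obtain N where "\<forall>j\<ge>N. c0 < (\<integral>x. F th j x \<partial>P)" unfolding eventually_sequentially by blast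
    then show ?thesis by blast
  qed
  define J where "J th = (SOME j. (\<integral>x. F th j x \<partial>P) > c0)" for th
  have J: "(\<integral>x. F th (J th) x \<partial>P) > c0" if "th \<in> K" for th
    unfolding J_def using exj[OF that] by (rule someI_ex)
  define ball where "ball th = {th'. rho th' th < 1 / Suc (J th)}" for th
  have cov: "K \<subseteq> \<Union> (ball ` K)"
  proof
    fix th assume "th \<in> K"
    moreover have "th \<in> ball th" unfolding ball_def using rho0[of th] by simp
    ultimately show "th \<in> \<Union> (ball ` K)" by blast
  qed
  obtain Fin where Fin: "Fin \<subseteq> K" "finite Fin" "K \<subseteq> \<Union> (ball ` Fin)"
  proof (rule compactE_image[OF Kc, where f=ball and C=K])
    show "open (ball th)" for th unfolding ball_def by (rule open_ball_rho)
    show "K \<subseteq> \<Union> (ball ` K)" by (rule cov)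
  qed
  have FinT: "Fin \<subseteq> Th" using Fin(1) unfolding K_def by auto
  define Phi :: "'th option \<Rightarrow> 'p \<Rightarrow> real" where
    "Phi i = (case i of None \<Rightarrow> (\<lambda>x. - q th0 x) | Some th \<Rightarrow> F th (J th))" for i
  define cc :: "'th option \<Rightarrow> real" where "cc i = (\<integral>x. Phi i x \<partial>P)" for i
  define I where "I = insert None (Some ` Fin)"
  have I: "finite I" unfolding I_def using Fin(2) by auto
  define d where "d = Min (insert 1 ((\<lambda>th. ((\<integral>x. F th (J th) x \<partial>P) - c0) / 2) ` Fin))"
  have d: "d > 0"
  proof -
    have "\<forall>a\<in>insert 1 ((\<lambda>th. ((\<integral>x. F th (J th) x \<partial>P) - c0) / 2) ` Fin). 0 < a"
    proof
      fix a assume "a \<in> insert 1 ((\<lambda>th. ((\<integral>x. F th (J th) x \<partial>P) - c0) / 2) ` Fin)"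
      then consider "a = 1" | th where "th \<in> Fin" "a = ((\<integral>x. F th (J th) x \<partial>P) - c0) / 2" by blast
      then show "0 < a"
      proof cases
        case 2
        then have "th \<in> K" using Fin(1) by blast
        then show ?thesis using J[of th] 2 by simp
      qed simp
    qed
    then show ?thesis unfolding d_def using Fin(2) by (subst Min_gr_iff) auto
  qed
  have dle: "2 * d \<le> (\<integral>x. F th (J th) x \<partial>P) - c0" if "th \<in> Fin" for th
  proof -
    have "d \<le> ((\<integral>x. F th (J th) x \<partial>P) - c0) / 2" unfolding d_def using Fin(2) that by (intro Min_le) auto
    then show ?thesis by simp
  qed
  have Phi_int: "integrable P (Phi i)" if "i \<in> I" for i
    using that FinT q_int[OF th0] F_int unfolding I_def Phi_def by (auto split: option.split)
  have Phi_m[measurable]: "Phi i \<in> borel_measurable P" if "i \<in> I" for i using Phi_int[OF that] by auto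
  have ae1: "AE x in P. \<forall>i\<in>I. (\<lambda>N. S (Phi i) N x / real N) \<longlonglongrightarrow> cc i"
  proof (rule eventually_ball_finite[OF I], rule ballI)
    fix i assume i: "i \<in> I"
    show "AE x in P. (\<lambda>N. S (Phi i) N x / real N) \<longlonglongrightarrow> cc i"
      unfolding cc_def by (rule birkhoff_ae[OF erg Phi_int[OF i]])
  qed
  have "AE x in P. (\<forall>i\<in>I. (\<lambda>N. S (Phi i) N x / real N) \<longlonglongrightarrow> cc i) \<and> (\<forall>t. G ((T ^^ t) x) \<noteq> \<infinity>)"
    using ae1 G_fin_all by eventually_elim auto
  then obtain N0 where N0: "{x \<in> space P. \<not> ((\<forall>i\<in>I. (\<lambda>N. S (Phi i) N x / real N) \<longlonglongrightarrow> cc i) \<and> (\<forall>t. G ((T ^^ t) x) \<noteq> \<infinity>))} \<subseteq> N0"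
      "emeasure P N0 = 0" "N0 \<in> sets P"
    by (rule AE_E)
  define Nm where "Nm = jp -` N0 \<inter> space M"
  have Nm_s: "Nm \<in> sets M" unfolding Nm_def using jpm N0(3) by (rule measurable_sets)
  have "emeasure M Nm = emeasure (distr M P jp) N0" unfolding Nm_def by (rule emeasure_distr[OF jpm N0(3), symmetric])
  then have "emeasure M Nm = 0" using N0(2) jpd by simp
  then have Nm0: "measure M Nm = 0" by (simp add: measure_def)
  have good: "(\<forall>i\<in>I. (\<lambda>N. S (Phi i) N (jp w) / real N) \<longlonglongrightarrow> cc i) \<and> (\<forall>t. G ((T ^^ t) (jp w)) \<noteq> \<infinity>)"
    if "w \<in> space M" "w \<notin> Nm" for w
  proof -
    have "jp w \<in> space P" using jpm that(1) by (auto simp: measurable_def)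
    then show ?thesis using that N0(1) unfolding Nm_def by blast
  qed
  define B where "B i n w = (\<Sum>t\<in>{m<..n}. Phi i ((T ^^ t) (jp w))) / real (n - m)" for i n w
  define E where "E i n = {w \<in> space M. d \<le> \<bar>B i n w - cc i\<bar>}" for i n
  have Bm: "B i n \<in> borel_measurable M" if "i \<in> I" for i n
  proof -
    have "(\<lambda>w. Phi i ((T ^^ t) (jp w))) \<in> borel_measurable M" for t
      by (rule measurable_compose[OF measurable_compose[OF jpm Tk_meas] Phi_m[OF that]])
    then have "(\<lambda>w. \<Sum>t\<in>{m<..n}. Phi i ((T ^^ t) (jp w))) \<in> borel_measurable M"
      by (rule borel_measurable_sum)
    then show ?thesis unfolding B_def by (rule borel_measurable_divide) simp
  qed
  have E_s: "E i n \<in> sets M" if "i \<in> I" for i n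
    unfolding E_def using Bm[OF that, of n] by measurable
  have E_lim: "(\<lambda>n. measure M (E i n)) \<longlonglongrightarrow> 0" if i: "i \<in> I" for i
    unfolding E_def
  proof (rule conv_in_prob[OF probM _ _ d])
    show "B i n \<in> borel_measurable M" for n by (rule Bm[OF i])
    have "AE w in M. w \<notin> Nm" using Nm_s \<open>emeasure M Nm = 0\<close> by (intro AE_not_in) (simp add: null_sets_def)
    then show "AE w in M. (\<lambda>n. B i n w) \<longlonglongrightarrow> cc i"
    proof (rule AE_mp, intro AE_I2 impI)
      fix w assume "w \<in> space M" "w \<notin> Nm"
      then have "(\<lambda>N. S (Phi i) N (jp w) / real N) \<longlonglongrightarrow> cc i" using good i by blast
      then show "(\<lambda>n. B i n w) \<longlonglongrightarrow> cc i" unfolding B_def by (rule window_avg)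
    qed
  qed
  have incl: "{w \<in> space M. rho (thh n w) th0 > e} \<subseteq> Nm \<union> (\<Union>i\<in>I. E i n)" if n: "n > m" for n
  proof
    fix w assume w: "w \<in> {w \<in> space M. rho (thh n w) th0 > e}"
    show "w \<in> Nm \<union> (\<Union>i\<in>I. E i n)"
    proof (cases "w \<in> Nm")
      case False
      have wM: "w \<in> space M" using w by auto
      have Gg: "\<And>t. G ((T ^^ t) (jp w)) \<noteq> \<infinity>" using good[OF wM False] by blast
      define th' where "th' = thh n w"
      have th'T: "th' \<in> Th" and opt: "\<forall>th\<in>Th. (\<Sum>t\<in>{m<..n}. - q th' ((T ^^ t) (jp w))) \<le> (\<Sum>t\<in>{m<..n}. - q th ((T ^^ t) (jp w)))"
        using qmle[OF wM] unfolding th'_def by auto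
      have "th' \<in> K" unfolding K_def using th'T w unfolding th'_def by auto
      then obtain th where th: "th \<in> Fin" "rho th' th < 1 / Suc (J th)" using Fin(3) unfolding ball_def by auto
      have "(\<Sum>t\<in>{m<..n}. F th (J th) ((T ^^ t) (jp w))) \<le> (\<Sum>t\<in>{m<..n}. - q th' ((T ^^ t) (jp w)))"
        by (intro sum_mono F_le Gg th'T th(2))
      also have "\<dots> \<le> (\<Sum>t\<in>{m<..n}. - q th0 ((T ^^ t) (jp w)))" using opt th0 by blast
      finally have "B (Some th) n w \<le> B None n w"
        unfolding B_def Phi_def using n by (simp add: divide_right_mono)
      moreover have "2 * d \<le> cc (Some th) - cc None" using dle[OF th(1)] unfolding cc_def Phi_def c0_def by simp
      ultimately have "d \<le> \<bar>B (Some th) n w - cc (Some th)\<bar> \<or> d \<le> \<bar>B None n w - cc None\<bar>" by linarith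
      then have "w \<in> E (Some th) n \<or> w \<in> E None n" unfolding E_def using wM by auto
      moreover have "Some th \<in> I" "None \<in> I" unfolding I_def using th(1) by auto
      ultimately show ?thesis by blast
    qed simp
  qed
  have bound: "measure M {w \<in> space M. rho (thh n w) th0 > e} \<le> (\<Sum>i\<in>I. measure M (E i n))" if n: "n > m" for n
  proof -
    have U: "(\<Union>i\<in>I. E i n) \<in> sets M" using I E_s by (intro sets.finite_UN) auto
    have "measure M {w \<in> space M. rho (thh n w) th0 > e} \<le> measure M (Nm \<union> (\<Union>i\<in>I. E i n))"
      using incl[OF n] sets.Un[OF Nm_s U] by (rule pM.finite_measure_mono)
    also have "\<dots> \<le> measure M Nm + measure M (\<Union>i\<in>I. E i n)"
      using Nm_s E_s I by (intro measure_Un_le) auto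
    also have "measure M (\<Union>i\<in>I. E i n) \<le> (\<Sum>i\<in>I. measure M (E i n))"
      using E_s I by (intro pM.finite_measure_subadditive_finite) auto
    finally show ?thesis using Nm0 by simp
  qed
  have lim: "(\<lambda>n. \<Sum>i\<in>I. measure M (E i n)) \<longlonglongrightarrow> 0" by (intro tendsto_null_sum E_lim)
  show ?thesis
  proof (rule tendsto_sandwich[OF _ _ tendsto_const lim])
    show "eventually (\<lambda>n. 0 \<le> measure M {w \<in> space M. rho (thh n w) th0 > e}) sequentially" by simp
    show "eventually (\<lambda>n. measure M {w \<in> space M. rho (thh n w) th0 > e} \<le> (\<Sum>i\<in>I. measure M (E i n))) sequentially"
      using eventually_gt_at_top[of m] by (rule eventually_mono) (rule bound)
  qed
qed

end


lemma sp_space: "space path_space = UNIV"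
  unfolding path_space_def by (simp add: space_PiM PiE_def extensional_def)

lemma jp_meas:
  assumes "\<And>t. Y1 t \<in> borel_measurable M" "\<And>t. Y2 t \<in> borel_measurable M"
  shows "joint_path Y1 Y2 \<in> measurable M path_space"
  unfolding path_space_def joint_path_def
proof (rule measurable_PiM_single'[where f="\<lambda>t w. (Y1 t w, Y2 t w)"])
  fix i :: int show "(\<lambda>w. (Y1 i w, Y2 i w)) \<in> borel_measurable M" using assms by measurable
qed auto

lemma shift_meas: "time_shift \<in> measurable path_space path_space"
  unfolding path_space_def time_shift_def
proof (rule measurable_PiM_single'[where f="\<lambda>t x. x (t + 1)"])
  fix i :: int show "(\<lambda>x. x (i + 1)) \<in> measurable (PiM UNIV (\<lambda>_. borel)) borel"
    by (rule measurable_component_singleton) simp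
qed (auto simp: space_PiM)

lemma comp_meas: "(\<lambda>x. x s) \<in> measurable path_space (borel :: (real \<times> real) measure)"
  unfolding path_space_def by (rule measurable_component_singleton) simp

lemma Z1_meas: "(\<lambda>x. fst (x s)) \<in> borel_measurable path_space"
proof -
  have f: "(fst :: real \<times> real \<Rightarrow> real) \<in> borel_measurable borel"
    by (rule borel_measurable_continuous_onI) (intro continuous_intros)
  show ?thesis using measurable_compose[OF comp_meas f] by simp
qed

lemma Z2_meas: "(\<lambda>x. snd (x s)) \<in> borel_measurable path_space"
proof -
  have f: "(snd :: real \<times> real \<Rightarrow> real) \<in> borel_measurable borel"
    by (rule borel_measurable_continuous_onI) (intro continuous_intros)
  show ?thesis using measurable_compose[OF comp_meas f] by simp
qed

lemma lin_pred_meas: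
  assumes "Ta \<in> borel_measurable borel" "Tb \<in> borel_measurable borel"
    "\<And>s. Za s \<in> borel_measurable N" "\<And>s. Zb s \<in> borel_measurable N"
  shows "lin_pred a b Ta Tb Za Zb th t \<in> borel_measurable N"
proof -
  have m1: "(\<lambda>x. Ta (Za u x)) \<in> borel_measurable N" for u by (rule measurable_compose[OF assms(3) assms(1)])
  have m2: "(\<lambda>x. Tb (Zb u x)) \<in> borel_measurable N" for u by (rule measurable_compose[OF assms(4) assms(2)])
  show ?thesis unfolding lin_pred_def using m1 m2 by measurable
qed

lemma inv_cont:
  fixes g :: "real \<Rightarrow> real"
  assumes "open D" "bij_betw g D UNIV" "continuous_on D g"
  shows "continuous_on UNIV (inv_into D g)"
proof -
  have im: "g ` D = UNIV" using assms(2) by (rule bij_betw_imp_surj_on)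
  have inj: "inj_on g D" using assms(2) by (rule bij_betw_imp_inj_on)
  have "continuous_on (g ` D) (inv_into D g)"
    by (rule continuous_on_inverse_open[OF assms(1) assms(3)]) (auto simp: inv_into_f_f[OF inj])
  then show ?thesis using im by simp
qed

lemma QL_Iv: "quasi_loglik phi V y mu = (1 / phi) * Iv (\<lambda>w. inverse (V w)) y mu"
  unfolding quasi_loglik_def Iv_def II_def by (simp add: divide_inverse)

lemma h_cont:
  fixes V :: "real \<Rightarrow> real" and D :: "real set"
  assumes "continuous_on D V" "\<forall>x\<in>D. V x > 0"
  shows "continuous_on D (\<lambda>w. inverse (V w))"
  by (rule continuous_on_inverse[OF assms(1)]) (use assms(2) in auto)

lemma QL_cont:
  fixes V :: "real \<Rightarrow> real" and D :: "real set"
  assumes "open D" "continuous_on D V" "\<forall>x\<in>D. V x > 0" "m0 \<in> D"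
  shows "isCont (quasi_loglik phi V y) m0"
proof -
  have "isCont (\<lambda>m. (1 / phi) * Iv (\<lambda>w. inverse (V w)) y m) m0"
    by (intro continuous_intros Iv_cont_m[OF assms(1) h_cont[OF assms(2,3)] assms(4)])
  then show ?thesis unfolding QL_Iv[abs_def] by simp
qed

lemma QL_meas:
  fixes N :: "'c measure" and V :: "real \<Rightarrow> real" and D :: "real set"
  assumes "open D" "continuous_on D V" "\<forall>x\<in>D. V x > 0"
    and Y: "Y \<in> borel_measurable N" and Mu: "Mu \<in> borel_measurable N"
    and inD: "\<And>x. x \<in> space N \<Longrightarrow> Mu x \<in> D"
  shows "(\<lambda>x. quasi_loglik phi V (Y x) (Mu x)) \<in> borel_measurable N"
proof (rule carath_meas[OF assms(1) _ _ Y Mu inD])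
  fix m assume m: "m \<in> D"
  have "(\<lambda>y. (1 / phi) * Iv (\<lambda>w. inverse (V w)) y m) \<in> borel_measurable borel"
    using Iv_meas_y[OF assms(1) h_cont[OF assms(2,3)] m] by measurable
  then show "(\<lambda>y. quasi_loglik phi V y m) \<in> borel_measurable borel" unfolding QL_Iv .
  fix y show "isCont (quasi_loglik phi V y) m" by (rule QL_cont[OF assms(1-3) m])
qed

lemma coord_le: "i < d \<Longrightarrow> \<bar>x i - y i\<bar> \<le> coord_dist d x y"
proof -
  assume i: "i < d"
  have "(x i - y i)^2 \<le> (\<Sum>j<d. (x j - y j)^2)"
    using i by (intro member_le_sum) auto
  then have "sqrt ((x i - y i)^2) \<le> coord_dist d x y" unfolding coord_dist_def by (rule real_sqrt_le_mono)
  then show ?thesis by simp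
qed

lemma lin_pred_tendsto:
  assumes "\<And>i. i < a + b + 1 \<Longrightarrow> (\<lambda>k. c k i) \<longlonglongrightarrow> th i"
  shows "(\<lambda>k. lin_pred a b Ta Tb Za Zb (c k) t x) \<longlonglongrightarrow> lin_pred a b Ta Tb Za Zb th t x"
  unfolding lin_pred_def
  by (intro tendsto_add tendsto_sum tendsto_mult tendsto_const assms) auto

lemma shift_pow: "(time_shift ^^ n) x = (\<lambda>s. x (s + int n))"
  by (induction n) (simp_all add: time_shift_def ac_simps)

lemma lin_pred_shift:
  assumes "\<And>u. Za u y = Ya (u + t) w" "\<And>u. Zb u y = Yb (u + t) w"
  shows "lin_pred a b Ta Tb Ya Yb th t w = lin_pred a b Ta Tb Za Zb th 0 y"
  using assms unfolding lin_pred_def by (simp add: algebra_simps)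


theorem theorem1:
  fixes M :: "'a measure"
    and Y1 Y2 :: "int \<Rightarrow> 'a \<Rightarrow> real"
    and p k r s :: nat
    and g1 g2 :: "real \<Rightarrow> real" and D1 D2 :: "real set"
    and T1 T2 :: "real \<Rightarrow> real"
    and V1 V2 :: "real \<Rightarrow> real" and phi1 phi2 :: real
    and Theta1 Theta2 :: "(nat \<Rightarrow> real) set"
    and theta0 :: "(nat \<Rightarrow> real) \<times> (nat \<Rightarrow> real)"
    and theta_hat :: "nat \<Rightarrow> 'a \<Rightarrow> (nat \<Rightarrow> real) \<times> (nat \<Rightarrow> real)"
    and mu1 mu2 Q1 Q2 :: "(nat \<Rightarrow> real) \<Rightarrow> int \<Rightarrow> 'a \<Rightarrow> real"
    and Qtilde :: "nat \<Rightarrow> (nat \<Rightarrow> real) \<times> (nat \<Rightarrow> real) \<Rightarrow> 'a \<Rightarrow> real"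
    and m :: nat
  defines "mu1 \<equiv> \<lambda>th t w. mix_mean g1 D1 r s T1 T2 Y1 Y2 th t w"
    and "mu2 \<equiv> \<lambda>th t w. mix_mean g2 D2 p k T2 T1 Y2 Y1 th t w"
    and "Q1 \<equiv> \<lambda>th t w. quasi_loglik phi1 V1 (Y1 t w) (mu1 th t w)"
    and "Q2 \<equiv> \<lambda>th t w. quasi_loglik phi2 V2 (Y2 t w) (mu2 th t w)"
    and "m \<equiv> max (max p k) (max r s)"
    and "Qtilde \<equiv> \<lambda>n th w. \<Sum>t\<in>{int m + 1..int n}. Q1 (fst th) t w + Q2 (snd th) t w"
  assumes prob: "prob_space M"
    and Y_meas: "\<And>t. Y1 t \<in> borel_measurable M" "\<And>t. Y2 t \<in> borel_measurable M"
    (* link functions: continuous, invertible (bijection from the open mean domain onto R), twice differentiable *)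
    and links: "open D1" "open D2" "bij_betw g1 D1 UNIV" "bij_betw g2 D2 UNIV"
      "continuous_on D1 g1" "continuous_on D2 g2"
      "g1 differentiable_on D1" "deriv g1 differentiable_on D1"
      "g2 differentiable_on D2" "deriv g2 differentiable_on D2"
    (* transformations and variance functions *)
    and T_meas: "T1 \<in> borel_measurable borel" "T2 \<in> borel_measurable borel"
    and V_var: "continuous_on D1 V1" "continuous_on D2 V2" "\<forall>x\<in>D1. V1 x > 0" "\<forall>x\<in>D2. V2 x > 0"
    and phi_pos: "phi1 > 0" "phi2 > 0"
    (* MixTSQL model with true parameter theta0 *)
    and cind: "\<And>t. cond_indep M (past_sigma M Y1 Y2 t) (Y1 t) (Y2 t)"
    and integr: "\<And>t. integrable M (Y1 t)" "\<And>t. integrable M (Y2 t)"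
      "\<And>t. integrable M (\<lambda>w. (Y1 t w)^2)" "\<And>t. integrable M (\<lambda>w. (Y2 t w)^2)"
    and cmean1: "\<And>t. AE w in M. real_cond_exp M (past_sigma M Y1 Y2 t) (Y1 t) w = mu1 (fst theta0) t w"
    and cmean2: "\<And>t. AE w in M. real_cond_exp M (past_sigma M Y1 Y2 t) (Y2 t) w = mu2 (snd theta0) t w"
    and cvar1: "\<And>t. AE w in M. real_cond_exp M (past_sigma M Y1 Y2 t)
                  (\<lambda>v. (Y1 t v - mu1 (fst theta0) t v)^2) w = phi1 * V1 (mu1 (fst theta0) t w)"
    and cvar2: "\<And>t. AE w in M. real_cond_exp M (past_sigma M Y1 Y2 t)
                  (\<lambda>v. (Y2 t v - mu2 (snd theta0) t v)^2) w = phi2 * V2 (mu2 (snd theta0) t w)"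
    (* (A2) *)
    and A2: "stationary_proc M Y1 Y2" "ergodic_proc M Y1 Y2"
    (* (B1) *)
    and B1: "Theta1 \<subseteq> coord_space (r + s + 1)" "Theta2 \<subseteq> coord_space (p + k + 1)"
      "compact (Theta1 \<times> Theta2)"
      "\<exists>U. openin (top_of_set (coord_space (r + s + 1) \<times> coord_space (p + k + 1))) U
            \<and> theta0 \<in> U \<and> U \<subseteq> Theta1 \<times> Theta2"
    (* (C1) *)
    and C1: "\<And>t. (\<integral>\<^sup>+ w. (SUP th\<in>Theta1 \<times> Theta2. ennreal \<bar>Q1 (fst th) t w + Q2 (snd th) t w\<bar>) \<partial>M) < \<infinity>"
    (* (C2) *)
    and C2: "\<And>t th. th \<in> Theta1 \<times> Theta2 \<Longrightarrow> th \<noteq> theta0 \<Longrightarrow>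
       (\<integral>w. - Q1 (fst theta0) t w - Q2 (snd theta0) t w \<partial>M) < (\<integral>w. - Q1 (fst th) t w - Q2 (snd th) t w \<partial>M)"
    (* QMLE: a measurable minimiser of -Qtilde over Theta *)
    and qmle_meas: "\<And>n i. (\<lambda>w. fst (theta_hat n w) i) \<in> borel_measurable M"
      "\<And>n i. (\<lambda>w. snd (theta_hat n w) i) \<in> borel_measurable M"
    and qmle: "\<And>n w. w \<in> space M \<Longrightarrow> theta_hat n w \<in> Theta1 \<times> Theta2 \<and>
       (\<forall>th\<in>Theta1 \<times> Theta2. - Qtilde n (theta_hat n w) w \<le> - Qtilde n th w)"
  shows "\<forall>e>0. (\<lambda>n. measure M {w \<in> space M.
            sqrt ((coord_dist (r + s + 1) (fst (theta_hat n w)) (fst theta0))^2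
                + (coord_dist (p + k + 1) (snd (theta_hat n w)) (snd theta0))^2) > e})
          \<longlonglongrightarrow> 0"
  proof -
  interpret pM: prob_space M by (rule prob)
  define jp where "jp = joint_path Y1 Y2"
  define P where "P = path_law M Y1 Y2"
  have jpm0: "jp \<in> measurable M path_space" unfolding jp_def using Y_meas by (rule jp_meas)
  have P_def2: "P = distr M path_space jp" unfolding P_def path_law_def jp_def ..
  have sP: "sets P = sets path_space" unfolding P_def2 by simp
  have spP: "space P = UNIV" unfolding P_def2 by (simp add: sp_space)
  have probP: "prob_space P" unfolding P_def2 by (rule pM.prob_space_distr[OF jpm0])
  have Tm: "time_shift \<in> measurable P P"
    using shift_meas by (simp add: measurable_cong_sets[OF sP sP])
  have Tp: "distr P P time_shift = P"
  proof -
    have "distr P P time_shift = distr P path_space time_shift" by (rule distr_cong) (simp_all add: sP)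
    also have "\<dots> = P" using A2(1) unfolding stationary_proc_def P_def by simp
    finally show ?thesis .
  qed
  have mp: "mpres P time_shift" by (rule mpres.intro[OF probP Tm Tp])
  have erg: "measure P A = 0 \<or> measure P A = 1" if "A \<in> sets P" "time_shift -` A \<inter> space P = A" for A
  proof -
    have "A \<in> sets path_space" using that(1) sP by simp
    moreover have "time_shift -` A \<inter> space path_space = A" using that(2) spP sp_space by simp
    ultimately show ?thesis using A2(2) unfolding ergodic_proc_def P_def by blast
  qed
  have jpm: "jp \<in> measurable M P" using jpm0 by (simp add: measurable_cong_sets[OF refl sP])
  have jpd: "distr M P jp = P" unfolding P_def2 by (rule distr_cong) (simp_all)
  define Z1 where "Z1 = (\<lambda>(u::int) (x::int \<Rightarrow> real \<times> real). fst (x u))"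
  define Z2 where "Z2 = (\<lambda>(u::int) (x::int \<Rightarrow> real \<times> real). snd (x u))"
  define pm1 where "pm1 a x = inv_into D1 g1 (lin_pred r s T1 T2 Z1 Z2 a 0 x)" for a x
  define pm2 where "pm2 b x = inv_into D2 g2 (lin_pred p k T2 T1 Z2 Z1 b 0 x)" for b x
  define q where "q th x = quasi_loglik phi1 V1 (fst (x 0)) (pm1 (fst th) x)
      + quasi_loglik phi2 V2 (snd (x 0)) (pm2 (snd th) x)" for th :: "(nat \<Rightarrow> real) \<times> (nat \<Rightarrow> real)" and x
  define rho where "rho th th' = sqrt ((coord_dist (r + s + 1) (fst th) (fst th'))^2
      + (coord_dist (p + k + 1) (snd th) (snd th'))^2)" for th th' :: "(nat \<Rightarrow> real) \<times> (nat \<Rightarrow> real)"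
  have Qq: "Q1 (fst th) (int n) w + Q2 (snd th) (int n) w = q th ((time_shift ^^ n) (jp w))" for th n w
  proof -
    have l1: "lin_pred r s T1 T2 Y1 Y2 (fst th) (int n) w = lin_pred r s T1 T2 Z1 Z2 (fst th) 0 (\<lambda>u. jp w (u + int n))"
      by (rule lin_pred_shift) (simp_all add: Z1_def Z2_def jp_def joint_path_def)
    have l2: "lin_pred p k T2 T1 Y2 Y1 (snd th) (int n) w = lin_pred p k T2 T1 Z2 Z1 (snd th) 0 (\<lambda>u. jp w (u + int n))"
      by (rule lin_pred_shift) (simp_all add: Z1_def Z2_def jp_def joint_path_def)
    show ?thesis
      unfolding Q1_def Q2_def mu1_def mu2_def mix_mean_def q_def pm1_def pm2_def shift_pow l1 l2
      by (simp add: jp_def joint_path_def)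
  qed
  have Qq0: "Q1 (fst th) 0 w + Q2 (snd th) 0 w = q th (jp w)" for th w
    using Qq[of th 0 w] by simp
  have im1: "g1 ` D1 = UNIV" using links(3) by (rule bij_betw_imp_surj_on)
  have im2: "g2 ` D2 = UNIV" using links(4) by (rule bij_betw_imp_surj_on)
  have ic1: "continuous_on UNIV (inv_into D1 g1)" by (rule inv_cont[OF links(1) links(3) links(5)])
  have ic2: "continuous_on UNIV (inv_into D2 g2)" by (rule inv_cont[OF links(2) links(4) links(6)])
  have pm1D: "pm1 a x \<in> D1" for a x unfolding pm1_def using im1 by (intro inv_into_into) auto
  have pm2D: "pm2 b x \<in> D2" for b x unfolding pm2_def using im2 by (intro inv_into_into) auto
  have Z1m: "Z1 u \<in> borel_measurable path_space" for u unfolding Z1_def using Z1_meas by simp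
  have Z2m: "Z2 u \<in> borel_measurable path_space" for u unfolding Z2_def using Z2_meas by simp
  have pm1m: "pm1 a \<in> borel_measurable path_space" for a
    unfolding pm1_def
    by (rule measurable_compose[OF lin_pred_meas[OF T_meas Z1m Z2m] borel_measurable_continuous_onI[OF ic1]])
  have pm2m: "pm2 b \<in> borel_measurable path_space" for b
    unfolding pm2_def
    by (rule measurable_compose[OF lin_pred_meas[OF T_meas(2,1) Z2m Z1m] borel_measurable_continuous_onI[OF ic2]])
  have qm0: "q th \<in> borel_measurable path_space" for th
  proof -
    have a: "(\<lambda>x. quasi_loglik phi1 V1 (fst (x 0)) (pm1 (fst th) x)) \<in> borel_measurable path_space"
      by (rule QL_meas[OF links(1) V_var(1) V_var(3) Z1_meas pm1m pm1D])
    have b: "(\<lambda>x. quasi_loglik phi2 V2 (snd (x 0)) (pm2 (snd th) x)) \<in> borel_measurable path_space"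
      by (rule QL_meas[OF links(2) V_var(2) V_var(4) Z2_meas pm2m pm2D])
    show ?thesis unfolding q_def using a b by (rule borel_measurable_add)
  qed
  have qm: "q th \<in> borel_measurable P" for th using qm0[of th] by (simp add: measurable_cong_sets[OF sP refl])
  have int_eq: "(\<integral>x. f x \<partial>P) = (\<integral>w. f (jp w) \<partial>M)" if "f \<in> borel_measurable path_space" for f :: "_ \<Rightarrow> real"
    unfolding P_def2 by (rule integral_distr[OF jpm0 that])
  have C2': "(\<integral>x. - q theta0 x \<partial>P) < (\<integral>x. - q th x \<partial>P)" if "th \<in> Theta1 \<times> Theta2" "th \<noteq> theta0" for th
  proof -
    have "(\<integral>x. - q theta0 x \<partial>P) = (\<integral>w. - Q1 (fst theta0) 0 w - Q2 (snd theta0) 0 w \<partial>M)"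
      using int_eq[of "\<lambda>x. - q theta0 x"] qm0[of theta0] Qq0[of theta0, symmetric] by (simp add: algebra_simps)
    also have "\<dots> < (\<integral>w. - Q1 (fst th) 0 w - Q2 (snd th) 0 w \<partial>M)" by (rule C2[OF that])
    also have "\<dots> = (\<integral>x. - q th x \<partial>P)"
      using int_eq[of "\<lambda>x. - q th x"] qm0[of th] Qq0[of th, symmetric] by (simp add: algebra_simps)
    finally show ?thesis .
  qed
  have C1': "(\<integral>\<^sup>+ w. (SUP th\<in>Theta1 \<times> Theta2. ennreal \<bar>q th (jp w)\<bar>) \<partial>M) < \<infinity>"
    using C1[of 0] by (simp add: Qq0)
  have qmle': "theta_hat n w \<in> Theta1 \<times> Theta2 \<and> (\<forall>th\<in>Theta1 \<times> Theta2.
       (\<Sum>t\<in>{m<..n}. - q (theta_hat n w) ((time_shift ^^ t) (jp w))) \<le> (\<Sum>t\<in>{m<..n}. - q th ((time_shift ^^ t) (jp w))))"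
    if w: "w \<in> space M" for n w
  proof -
    have Qt: "Qtilde n th w = (\<Sum>t\<in>{m<..n}. q th ((time_shift ^^ t) (jp w)))" for th
    proof -
      have "{int m + 1..int n} = int ` {Suc m..n}" by (simp add: image_int_atLeastAtMost)
      then have "Qtilde n th w = (\<Sum>t\<in>{Suc m..n}. Q1 (fst th) (int t) w + Q2 (snd th) (int t) w)"
        unfolding Qtilde_def by (simp add: sum.reindex)
      also have "\<dots> = (\<Sum>t\<in>{m<..n}. q th ((time_shift ^^ t) (jp w)))"
        by (simp add: Qq atLeastSucAtMost_greaterThanAtMost)
      finally show ?thesis .
    qed
    from qmle[OF w] have a: "theta_hat n w \<in> Theta1 \<times> Theta2"
      and b: "\<forall>th\<in>Theta1 \<times> Theta2. - Qtilde n (theta_hat n w) w \<le> - Qtilde n th w" by auto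
    show ?thesis using a b[unfolded Qt] by (simp add: sum_negf)
  qed
  have rho_ge1: "coord_dist (r + s + 1) (fst a) (fst b) \<le> rho a b" for a b
  proof -
    have "sqrt ((coord_dist (r + s + 1) (fst a) (fst b))^2) \<le> rho a b"
      unfolding rho_def by (rule real_sqrt_le_mono) simp
    then show ?thesis by simp
  qed
  have rho_ge2: "coord_dist (p + k + 1) (snd a) (snd b) \<le> rho a b" for a b
  proof -
    have "sqrt ((coord_dist (p + k + 1) (snd a) (snd b))^2) \<le> rho a b"
      unfolding rho_def by (rule real_sqrt_le_mono) simp
    then show ?thesis by simp
  qed
  have isc1: "isCont (inv_into D1 g1) z" for z using ic1 continuous_on_eq_continuous_at[OF open_UNIV] by blast
  have isc2: "isCont (inv_into D2 g2) z" for z using ic2 continuous_on_eq_continuous_at[OF open_UNIV] by blast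
  have qc: "(\<lambda>j. q (c j) x) \<longlonglongrightarrow> q th x"
    if lim: "(\<lambda>j. rho (c j) th) \<longlonglongrightarrow> 0" for th x and c :: "nat \<Rightarrow> (nat \<Rightarrow> real) \<times> (nat \<Rightarrow> real)"
  proof -
    have co1: "(\<lambda>j. fst (c j) i) \<longlonglongrightarrow> fst th i" if i: "i < r + s + 1" for i
    proof -
      have "norm (fst (c j) i - fst th i) \<le> rho (c j) th" for j
        using coord_le[OF i, of "fst (c j)" "fst th"] rho_ge1[of "c j" th] by simp
      then have "(\<lambda>j. fst (c j) i - fst th i) \<longlonglongrightarrow> 0"
        by (intro Lim_null_comparison[OF always_eventually lim]) auto
      then show ?thesis by (rule LIM_zero_cancel)
    qed
    have co2: "(\<lambda>j. snd (c j) i) \<longlonglongrightarrow> snd th i" if i: "i < p + k + 1" for i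
    proof -
      have "norm (snd (c j) i - snd th i) \<le> rho (c j) th" for j
        using coord_le[OF i, of "snd (c j)" "snd th"] rho_ge2[of "c j" th] by simp
      then have "(\<lambda>j. snd (c j) i - snd th i) \<longlonglongrightarrow> 0"
        by (intro Lim_null_comparison[OF always_eventually lim]) auto
      then show ?thesis by (rule LIM_zero_cancel)
    qed
    have l1: "(\<lambda>j. pm1 (fst (c j)) x) \<longlonglongrightarrow> pm1 (fst th) x"
      unfolding pm1_def by (rule isCont_tendsto_compose[OF isc1 lin_pred_tendsto[OF co1]])
    have l2: "(\<lambda>j. pm2 (snd (c j)) x) \<longlonglongrightarrow> pm2 (snd th) x"
      unfolding pm2_def by (rule isCont_tendsto_compose[OF isc2 lin_pred_tendsto[OF co2]])
    have a: "(\<lambda>j. quasi_loglik phi1 V1 (fst (x 0)) (pm1 (fst (c j)) x)) \<longlonglongrightarrow> quasi_loglik phi1 V1 (fst (x 0)) (pm1 (fst th) x)"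
      by (rule isCont_tendsto_compose[OF QL_cont[OF links(1) V_var(1) V_var(3) pm1D] l1])
    have b: "(\<lambda>j. quasi_loglik phi2 V2 (snd (x 0)) (pm2 (snd (c j)) x)) \<longlonglongrightarrow> quasi_loglik phi2 V2 (snd (x 0)) (pm2 (snd th) x)"
      by (rule isCont_tendsto_compose[OF QL_cont[OF links(2) V_var(2) V_var(4) pm2D] l2])
    show ?thesis unfolding q_def by (rule tendsto_add[OF a b])
  qed
  have cf: "continuous_on UNIV (\<lambda>th'::(nat \<Rightarrow> real) \<times> (nat \<Rightarrow> real). fst th' i)" for i
    by (rule continuous_on_compose2[OF continuous_on_product_coordinates continuous_on_fst[OF continuous_on_id]]) auto
  have cs: "continuous_on UNIV (\<lambda>th'::(nat \<Rightarrow> real) \<times> (nat \<Rightarrow> real). snd th' i)" for i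
    by (rule continuous_on_compose2[OF continuous_on_product_coordinates continuous_on_snd[OF continuous_on_id]]) auto
  have rhoc: "continuous_on UNIV (\<lambda>th'. rho th' th)" for th
    unfolding rho_def coord_dist_def by (intro continuous_intros cf cs)
  have rho0: "rho th th = 0" for th unfolding rho_def coord_dist_def by simp
  have rho_nn: "rho th th' \<ge> 0" for th th' unfolding rho_def by simp
  have th0: "theta0 \<in> Theta1 \<times> Theta2" using B1(4) by blast
  have cs: "cons_setup P time_shift M jp q (Theta1 \<times> Theta2) theta0 rho"
  proof (rule cons_setup.intro[OF mp], rule cons_setup_axioms.intro)
    show "\<And>A. A \<in> sets P \<Longrightarrow> time_shift -` A \<inter> space P = A \<Longrightarrow> measure P A = 0 \<or> measure P A = 1"
      by (rule erg)
    show "prob_space M" by (rule prob)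
    show "jp \<in> measurable M P" by (rule jpm)
    show "distr M P jp = P" by (rule jpd)
    show "\<And>th. th \<in> Theta1 \<times> Theta2 \<Longrightarrow> q th \<in> borel_measurable P" using qm by blast
    show "\<And>th x c. th \<in> Theta1 \<times> Theta2 \<Longrightarrow> (\<And>k. c k \<in> Theta1 \<times> Theta2) \<Longrightarrow>
        (\<lambda>k. rho (c k) th) \<longlonglongrightarrow> 0 \<Longrightarrow> (\<lambda>k. q (c k) x) \<longlonglongrightarrow> q th x"
      using qc by blast
    show "(\<integral>\<^sup>+ w. (SUP th\<in>Theta1 \<times> Theta2. ennreal \<bar>q th (jp w)\<bar>) \<partial>M) < \<infinity>" by (rule C1')
    show "\<And>th. th \<in> Theta1 \<times> Theta2 \<Longrightarrow> th \<noteq> theta0 \<Longrightarrow> (\<integral>x. - q theta0 x \<partial>P) < (\<integral>x. - q th x \<partial>P)"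
      by (rule C2')
    show "compact (Theta1 \<times> Theta2)" by (rule B1(3))
    show "theta0 \<in> Theta1 \<times> Theta2" by (rule th0)
    show "\<And>th. continuous_on UNIV (\<lambda>th'. rho th' th)" by (rule rhoc)
    show "\<And>th. rho th th = 0" by (rule rho0)
    show "\<And>th th'. rho th th' \<ge> 0" by (rule rho_nn)
  qed
  show ?thesis
  proof (intro allI impI)
    fix e :: real assume e: "e > 0"
    have "(\<lambda>n. measure M {w \<in> space M. rho (theta_hat n w) theta0 > e}) \<longlonglongrightarrow> 0"
      using cons_setup.consistency[OF cs, where thh=theta_hat and m=m and e=e] qmle' e by blast
    then show "(\<lambda>n. measure M {w \<in> space M.
            sqrt ((coord_dist (r + s + 1) (fst (theta_hat n w)) (fst theta0))^2
                + (coord_dist (p + k + 1) (snd (theta_hat n w)) (snd theta0))^2) > e}) \<longlonglongrightarrow> 0"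
      unfolding rho_def .
  qed
qed

end
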